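(* Fix an integer $D\ge 2$ and parameters $0<\lambda_1<\mu_1$, $\pi_S\in(0,1]$, and let $a,b$ be as in the context. For each $N$ for which there is at least one rooted plane tree with $N$ vertices and all out-degrees at most $D$, let $\mathbf P_N$ be the law of the empirical out-degree vector $$\Big(\tfrac{\chi_0(T)}{N},\tfrac{\chi_1(T)}{N},\dots,\tfrac{\chi_D(T)}{N}\Big)\in[0,1]^{D+1},$$ where $T$ is drawn from the tree-marginal $\Pi(T)=a^{|V|}b^{|V|-1}$ conditioned on $T$ having $N$ vertices and all out-degrees $\le D$. Equivalently, $T$ is uniformly distributed over such plane trees. Then there is a sequence of probability measures $(Q_N)_{N}$ on $[0,1]^{D+1}\times\mathcal M_D$ with marginals $Q_N^{(1)}$ and $Q_N^{(2)}$ such that: 1. $Q_N^{(1)}=\mathbf P_N$ for every $N$; 2. $Q_N\big\{(x,y): \sum_{k=0}^D|x_k-y_k|>2/N\big\}=0$ for every $N$; 3. $(Q_N^{(2)})_N$ satisfies a large deviation principle on $\mathcal M_D$ with speed $N$ and rate function $$I(p)=J(p)-\min_{q\in\mathcal M_D}J(q),\qquad J(p)=\log(a^{-1})+\log(b^{-1})+\sum_{k=0}^D p_k\log p_k .$$ Here $0\log 0=0$. The LDP means: for every closed $C\subseteq\mathcal M_D$, $\limsup_N \frac1N\log Q_N^{(2)}(C)\le-\inf_{p\in C}I(p)$, and for every open $O\subseteq\mathcal M_D$, $\liminf_N\frac1N\log Q_N^{(2)}(O)\ge-\inf_{p\in O}I(p)$.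
   Context: A rooted plane tree is a finite rooted tree in which the children of each vertex are linearly ordered. The out-degree $|c(v)|$ of a vertex $v$ is its number of children. For a tree $T$, $\chi_k(T)$ denotes the number of vertices of out-degree $k$. Set $$a=\frac{\mu_1-\lambda_1}{\mu_1-\lambda_1(1-\pi_S)},\qquad b=\frac{\lambda_1\pi_S}{\mu_1-\lambda_1(1-\pi_S)}.$$ The set $\mathcal M_D$ is $\{p=(p_0,\dots,p_D)\in[0,1]^{D+1}:\sum_{k=0}^D p_k=1,\ \sum_{k=1}^D kp_k=1\}$, with the metric induced from $\mathbb R^{D+1}$. In the TKF91 Structure Tree model, the weight of a rooted plane tree $T=(V,E)$ is $\Pi(T)=a^{|V|}b^{|V|-1}$. *)

theory Defs
  imports "HOL-Probability.Probability"
begin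

datatype ptree = Node "ptree list"

fun nverts :: "ptree \<Rightarrow> nat" where
  "nverts (Node ts) = 1 + sum_list (map nverts ts)"

fun chi :: "nat \<Rightarrow> ptree \<Rightarrow> nat" where
  "chi k (Node ts) = (if length ts = k then 1 else 0) + sum_list (map (chi k) ts)"

fun deg_le :: "nat \<Rightarrow> ptree \<Rightarrow> bool" where
  "deg_le D (Node ts) = (length ts \<le> D \<and> (\<forall>t\<in>set ts. deg_le D t))"

definition trees :: "nat \<Rightarrow> nat \<Rightarrow> ptree set" where
  "trees N D = {T. nverts T = N \<and> deg_le D T}"

text \<open>Vectors in R^(D+1) are encoded as functions nat => real, indices 0..D, zero beyond D.\<close>
definition cube :: "nat \<Rightarrow> (nat \<Rightarrow> real) set" where
  "cube D = {x. (\<forall>k\<le>D. 0 \<le> x k \<and> x k \<le> 1) \<and> (\<forall>k>D. x k = 0)}"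

definition MD :: "nat \<Rightarrow> (nat \<Rightarrow> real) set" where
  "MD D = {p. (\<forall>k\<le>D. 0 \<le> p k \<and> p k \<le> 1) \<and> (\<forall>k>D. p k = 0)
              \<and> (\<Sum>k\<le>D. p k) = 1 \<and> (\<Sum>k=1..D. real k * p k) = 1}"

definition emp_deg :: "nat \<Rightarrow> nat \<Rightarrow> ptree \<Rightarrow> (nat \<Rightarrow> real)" where
  "emp_deg D N T = (\<lambda>k. if k \<le> D then real (chi k T) / real N else 0)"

text \<open>Law P_N of the empirical out-degree vector of a uniform tree from trees N D
  (equivalently, the Pi-weighted tree conditioned on N vertices and out-degrees \<le> D,
   since Pi depends only on the number of vertices).\<close>
definition PN :: "nat \<Rightarrow> nat \<Rightarrow> (nat \<Rightarrow> real) measure" where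
  "PN D N = distr (measure_pmf (pmf_of_set (trees N D))) borel (emp_deg D N)"

definition param_a :: "real \<Rightarrow> real \<Rightarrow> real \<Rightarrow> real" where
  "param_a lam1 mu1 piS = (mu1 - lam1) / (mu1 - lam1 * (1 - piS))"

definition param_b :: "real \<Rightarrow> real \<Rightarrow> real \<Rightarrow> real" where
  "param_b lam1 mu1 piS = (lam1 * piS) / (mu1 - lam1 * (1 - piS))"

definition xlogx :: "real \<Rightarrow> real" where
  "xlogx x = (if x = 0 then 0 else x * ln x)"

definition Jfun :: "real \<Rightarrow> real \<Rightarrow> nat \<Rightarrow> (nat \<Rightarrow> real) \<Rightarrow> real" where
  "Jfun a b D p = ln (1 / a) + ln (1 / b) + (\<Sum>k\<le>D. xlogx (p k))"

definition Ifun :: "real \<Rightarrow> real \<Rightarrow> nat \<Rightarrow> (nat \<Rightarrow> real) \<Rightarrow> real" where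
  "Ifun a b D p = Jfun a b D p - (INF q\<in>MD D. Jfun a b D q)"

definition eln :: "real \<Rightarrow> ereal" where
  "eln x = (if x = 0 then - \<infinity> else ereal (ln x))"

end

theory Submission
  imports Defs "HOL-Combinatorics.Multiset_Permutations" "HOL-Real_Asymp.Real_Asymp"
begin


fun pre :: "ptree \<Rightarrow> nat list" where
  "pre (Node ts) = length ts # concat (map pre ts)"

lemma length_pre: "length (pre t) = nverts t"
proof (induction t)
  case (Node ts)
  have "length (concat (map pre ts)) = sum_list (map nverts ts)"
    using Node.IH by (induction ts) auto
  then show ?case by simp
qed

lemma count_pre: "count (mset (pre t)) k = chi k t"
proof (induction t)
  case (Node ts)
  have "count (mset (concat (map pre ts))) k = sum_list (map (chi k) ts)"
    using Node.IH by (induction ts) auto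
  then show ?case by simp
qed

lemma deg_le_pre: "deg_le D t \<longleftrightarrow> (\<forall>x\<in>set (pre t). x \<le> D)"
proof (induction t)
  case (Node ts)
  then show ?case by auto
qed
lemma sum_list_pre: "sum_list (pre t) + 1 = nverts t"
proof (induction t)
  case (Node ts)
  have "sum_list (concat (map pre ts)) + length ts = sum_list (map nverts ts)"
    using Node.IH
  proof (induction ts)
    case (Cons a ts)
    have "sum_list (pre a) + 1 = nverts a" using Cons.prems by auto
    moreover have "sum_list (concat (map pre ts)) + length ts = sum_list (map nverts ts)"
      using Cons.IH Cons.prems by auto
    ultimately show ?case by simp
  qed simp
  then show ?case by simp
qed

lemma concat_pre_aux:
  "(\<forall>t\<in>set ts. \<forall>t' r r'. pre t @ r = pre t' @ r' \<longrightarrow> t = t' \<and> r = r') \<Longrightarrow>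
   length ts = length ts' \<Longrightarrow> concat (map pre ts) @ r = concat (map pre ts') @ r' \<Longrightarrow> ts = ts' \<and> r = r'"
proof (induction ts arbitrary: ts' r r')
  case Nil then show ?case by simp
next
  case (Cons a as)
  obtain b bs where ts': "ts' = b # bs" using Cons.prems(2) by (cases ts') simp_all
  from Cons.prems(3) have "pre a @ (concat (map pre as) @ r) = pre b @ (concat (map pre bs) @ r')"
    by (simp add: ts')
  moreover have "\<forall>t' r r'. pre a @ r = pre t' @ r' \<longrightarrow> a = t' \<and> r = r'"
    using Cons.prems(1) by (rule bspec) simp
  ultimately have ab: "a = b" and rest: "concat (map pre as) @ r = concat (map pre bs) @ r'"
    by (metis (no_types))+
  have p1: "\<forall>t\<in>set as. \<forall>t' r r'. pre t @ r = pre t' @ r' \<longrightarrow> t = t' \<and> r = r'"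
    using Cons.prems(1) by (meson list.set_intros(2))
  have p2: "length as = length bs" using Cons.prems(2) ts' by simp
  have "as = bs \<and> r = r'"
    by (rule Cons.IH[OF p1 p2 rest])
  then show ?case using ab ts' by simp
qed

lemma pre_prefix: "pre t @ r = pre t' @ r' \<Longrightarrow> t = t' \<and> r = r'"
proof (induction t arbitrary: t' r r')
  case (Node ts)
  obtain ts' where t': "t' = Node ts'" by (cases t')
  from Node.prems have l: "length ts = length ts'" and
    e: "concat (map pre ts) @ r = concat (map pre ts') @ r'" by (simp_all add: t')
  have h: "\<forall>t\<in>set ts. \<forall>t' r r'. pre t @ r = pre t' @ r' \<longrightarrow> t = t' \<and> r = r'"
    using Node.IH by blast
  have "ts = ts' \<and> r = r'"
    by (rule concat_pre_aux[OF h l e])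
  then show ?case by (simp add: t')
qed

lemma inj_pre: "inj pre"
proof (rule injI)
  fix x y assume "pre x = pre y"
  then show "x = y" using pre_prefix[of x "[]" y "[]"] by simp
qed

definition psum :: "nat list \<Rightarrow> int" where
  "psum w = sum_list (map (\<lambda>x. int x - 1) w)"

lemma psum_simps [simp]: "psum [] = 0" "psum (x # w) = int x - 1 + psum w"
  "psum (u @ v) = psum u + psum v"
  by (auto simp: psum_def)

lemma parse:
  "\<forall>k. (\<forall>j<length w. 0 < int k + psum (take j w)) \<longrightarrow> int k + psum w = 0 \<longrightarrow>
      (\<exists>ts. length ts = k \<and> concat (map pre ts) = w)"
proof (induction w)
  case Nil then show ?case by auto
next
  case (Cons d w)
  show ?case
  proof (intro allI impI)
    fix k assume pos: "\<forall>j<length (d # w). 0 < int k + psum (take j (d # w))"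
      and tot: "int k + psum (d # w) = 0"
    from pos[rule_format, of 0] have k1: "k \<ge> 1" by simp
    define k' where "k' = k - 1 + d"
    have ik: "int k' = int k - 1 + int d" using k1 by (simp add: k'_def)
    have "\<forall>j<length w. 0 < int k' + psum (take j w)"
    proof (intro allI impI)
      fix j assume "j < length w"
      then have "0 < int k + psum (take (Suc j) (d # w))" using pos by auto
      then show "0 < int k' + psum (take j w)" using ik by simp
    qed
    moreover have "int k' + psum w = 0" using tot ik by simp
    ultimately obtain ts where ts: "length ts = k'" "concat (map pre ts) = w"
      using Cons.IH by blast
    have dle: "d \<le> length ts" using ts k'_def k1 by simp
    define ts2 where "ts2 = Node (take d ts) # drop d ts"
    have "length ts2 = k" using ts dle k1 by (simp add: ts2_def k'_def)
    moreover have "concat (map pre ts2) = d # w"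
    proof -
      have "concat (map pre ts2) = d # concat (map pre (take d ts)) @ concat (map pre (drop d ts))"
        using dle by (simp add: ts2_def)
      also have "\<dots> = d # concat (map pre ts)"
        by (metis append_take_drop_id concat_append map_append)
      finally show ?thesis using ts by simp
    qed
    ultimately show "\<exists>ts. length ts = k \<and> concat (map pre ts) = d # w" by blast
  qed
qed


lemma psum_take_drop: "psum (take j w) + psum (drop j w) = psum w"
  by (metis append_take_drop_id psum_simps(3))

lemma rotation_valid:
  assumes lw: "length w = N" and N1: "N \<ge> 1" and pw: "psum w = -1"
  shows "\<exists>j<N. \<exists>t. pre t = rotate j w"
proof -
  define S where "S j = psum (take j w)" for j
  have fin: "finite (S ` {..<N})" "S ` {..<N} \<noteq> {}" using N1 by (auto simp: lessThan_empty_iff)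
  obtain j1 where j1: "j1 < N" "S j1 = Min (S ` {..<N})"
    using Min_in[OF fin] by auto
  define P where "P j \<longleftrightarrow> j < N \<and> (\<forall>i<N. S j \<le> S i)" for j
  have Pj1: "P j1" unfolding P_def using j1 fin by auto
  define j0 where "j0 = (LEAST j. P j)"
  have Pj0: "P j0" unfolding j0_def by (rule LeastI[of P, OF Pj1])
  have lt: "S j0 < S i" if "i < j0" for i
  proof -
    have "\<not> P i" using not_less_Least[of i P] that unfolding j0_def by blast
    moreover have "i < N" using that Pj0 unfolding P_def by auto
    ultimately obtain i' where "i' < N" "S i' < S i" unfolding P_def by auto
    then show ?thesis using Pj0 unfolding P_def by force
  qed
  have j0N: "j0 < N" using Pj0 P_def by auto
  have mn: "S j0 \<le> S i" if "i < N" for i using Pj0 that P_def by auto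
  have SN: "S N = -1" using pw lw by (simp add: S_def)
  have S0: "S 0 = 0" by (simp add: S_def)
  define r where "r = rotate j0 w"
  have r: "r = drop j0 w @ take j0 w" unfolding r_def using j0N lw by (simp add: rotate_drop_take)
  have ld: "length (drop j0 w) = N - j0" using lw by simp
  have pd: "psum (drop j0 w) = -1 - S j0" using psum_take_drop[of j0 w] pw by (simp add: S_def)
  have valid: "0 < int 1 + psum (take m r)" if m: "m < length r" for m
  proof (cases "m \<le> N - j0")
    case True
    have tm: "take m r = take m (drop j0 w)" using True ld r by simp
    have "take (j0 + m) w = take j0 w @ take m (drop j0 w)" by (simp add: take_add)
    then have "S (j0 + m) = S j0 + psum (take m r)" using tm by (simp add: S_def)
    moreover have "S (j0 + m) \<ge> S j0"
    proof (cases "j0 + m < N")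
      case True then show ?thesis using mn by simp
    next
      case False
      then have "j0 + m = N" using \<open>m \<le> N - j0\<close> j0N by simp
      then have "0 < j0" using m lw r by simp
      then have "S j0 < 0" using lt[of 0] S0 by simp
      then show ?thesis using \<open>j0 + m = N\<close> SN by simp
    qed
    ultimately show ?thesis by simp
  next
    case False
    define i where "i = m - (N - j0)"
    have i: "i < j0" using False m lw r i_def by simp
    have "take m r = drop j0 w @ take i w" using False ld r i_def i by (simp add: min_def)
    then have "psum (take m r) = -1 - S j0 + S i" using pd by (simp add: S_def)
    then show ?thesis using lt[OF i] by simp
  qed
  have tot: "int 1 + psum r = 0"
    using r psum_take_drop[of j0 w] pw by simp
  obtain ts where "length ts = 1" "concat (map pre ts) = r"
    using parse[rule_format, OF valid tot] by blast
  then obtain t where "pre t = r" by (cases ts) auto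
  then show ?thesis using j0N r_def by blast
qed

definition Tset :: "nat multiset \<Rightarrow> ptree set" where
  "Tset A = {t. mset (pre t) = A}"

lemma psum_eq: "psum w = int (sum_list w) - int (length w)"
  by (induction w) auto

lemma mset_rotate: "mset (rotate n xs) = mset xs"
proof -
  have "mset (rotate n xs) = mset (drop (n mod length xs) xs) + mset (take (n mod length xs) xs)"
    by (simp add: rotate_drop_take)
  also have "\<dots> = mset (take (n mod length xs) xs @ drop (n mod length xs) xs)"
    by (metis add.commute mset_append)
  finally show ?thesis by simp
qed

lemma Tset_words:
  assumes sA: "size A = N" and N1: "N \<ge> 1" and sm: "sum_mset A + 1 = N"
  shows "finite (Tset A)" "card (Tset A) \<le> card (permutations_of_multiset A)"
    "card (permutations_of_multiset A) \<le> N * card (Tset A)"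
proof -
  have sub: "pre ` Tset A \<subseteq> permutations_of_multiset A"
    by (auto simp: Tset_def intro: permutations_of_multisetI)
  have inj: "inj_on pre (Tset A)" using inj_pre by (simp add: inj_on_def inj_def)
  show fin: "finite (Tset A)"
    using finite_subset[OF sub finite_permutations_of_multiset] finite_imageD[OF _ inj] by blast
  show "card (Tset A) \<le> card (permutations_of_multiset A)"
    using card_inj_on_le[OF inj sub] by simp
  have cov: "permutations_of_multiset A \<subseteq> (\<Union>t\<in>Tset A. (\<lambda>i. rotate i (pre t)) ` {..<N})"
  proof
    fix w assume "w \<in> permutations_of_multiset A"
    then have mw: "mset w = A" by (rule permutations_of_multisetD)
    then have lw: "length w = N" using sA by (metis size_mset)
    have "sum_list w + 1 = N" using sm mw by (metis sum_mset_sum_list)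
    then have pw: "psum w = -1" using lw by (simp add: psum_eq)
    obtain j t where j: "j < N" and t: "pre t = rotate j w"
      using rotation_valid[OF lw N1 pw] by blast
    have tA: "t \<in> Tset A" using t mw by (simp add: Tset_def mset_rotate)
    show "w \<in> (\<Union>t\<in>Tset A. (\<lambda>i. rotate i (pre t)) ` {..<N})"
    proof (cases "j = 0")
      case True
      then have "w = rotate 0 (pre t)" using t by simp
      moreover have "0 \<in> {..<N}" using N1 by simp
      ultimately show ?thesis using tA by blast
    next
      case False
      have "rotate (N - j) (pre t) = rotate N w" using t j False by (simp add: rotate_rotate)
      also have "\<dots> = w" using lw by simp
      finally show ?thesis using tA j False by force
    qed
  qed
  have "card (permutations_of_multiset A) \<le> card (\<Union>t\<in>Tset A. (\<lambda>i. rotate i (pre t)) ` {..<N})"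
    by (rule card_mono[OF _ cov]) (use fin in auto)
  also have "\<dots> \<le> (\<Sum>t\<in>Tset A. card ((\<lambda>i. rotate i (pre t)) ` {..<N}))"
    by (rule card_UN_le[OF fin])
  also have "\<dots> \<le> (\<Sum>t\<in>Tset A. N)"
    by (rule sum_mono) (metis card_image_le card_lessThan finite_lessThan)
  finally show "card (permutations_of_multiset A) \<le> N * card (Tset A)" by (simp add: mult.commute)
qed

definition cm :: "(nat \<Rightarrow> nat) \<Rightarrow> nat \<Rightarrow> nat multiset" where
  "cm c D = (\<Sum>k\<le>D. replicate_mset (c k) k)"

lemma count_cm: "count (cm c D) j = (if j \<le> D then c j else 0)"
proof -
  have "count (cm c D) j = (\<Sum>k\<le>D. if k = j then c k else 0)"
    unfolding cm_def count_sum by (intro sum.cong) auto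
  then show ?thesis by (simp add: sum.delta')
qed

lemma size_cm: "size (cm c D) = (\<Sum>k\<le>D. c k)"
  by (induction D) (auto simp: cm_def)

lemma summ_cm: "sum_mset (cm c D) = (\<Sum>k\<le>D. k * c k)"
  by (induction D) (auto simp: cm_def)

lemma set_cm: "set_mset (cm c D) \<subseteq> {..D}"
proof
  fix x assume "x \<in># cm c D"
  then have "count (cm c D) x \<noteq> 0" by simp
  then show "x \<in> {..D}" by (simp add: count_cm split: if_splits)
qed

lemma chi_gt: "deg_le D T \<Longrightarrow> D < k \<Longrightarrow> chi k T = 0"
proof -
  assume "deg_le D T" "D < k"
  then have "k \<notin> set (pre T)" using deg_le_pre[of D T] by auto
  then have "count (mset (pre T)) k = 0" by simp
  then show ?thesis by (simp add: count_pre)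
qed

lemma mset_pre_cm: "deg_le D T \<Longrightarrow> mset (pre T) = cm (\<lambda>k. chi k T) D"
proof (rule multiset_eqI)
  fix x assume "deg_le D T"
  then show "count (mset (pre T)) x = count (cm (\<lambda>k. chi k T) D) x"
    by (cases "x \<le> D") (simp_all add: count_cm count_pre chi_gt)
qed


lemma card_cm:
  "real (card (permutations_of_multiset (cm c D))) = fact (\<Sum>k\<le>D. c k) / (\<Prod>k\<le>D. fact (c k))"
proof -
  let ?A = "cm c D"
  have "(\<Prod>x\<in>set_mset ?A. fact (count ?A x) :: nat) = (\<Prod>k\<le>D. fact (count ?A k))"
    by (rule prod.mono_neutral_left) (auto simp: set_cm count_eq_zero_iff[symmetric])
  also have "\<dots> = (\<Prod>k\<le>D. fact (c k))" by (intro prod.cong) (auto simp: count_cm)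
  finally have p: "(\<Prod>x\<in>set_mset ?A. fact (count ?A x) :: nat) = (\<Prod>k\<le>D. fact (c k))" .
  have "real (card (permutations_of_multiset ?A)) =
        real (fact (size ?A) div (\<Prod>x\<in>set_mset ?A. fact (count ?A x)))"
    by (simp add: card_permutations_of_multiset(1))
  also have "\<dots> = real (fact (size ?A)) / real (\<Prod>x\<in>set_mset ?A. fact (count ?A x))"
    by (rule real_of_nat_div[OF card_permutations_of_multiset(2)])
  finally show ?thesis by (simp add: p size_cm of_nat_prod)
qed


lemma tree_facts:
  assumes T: "T \<in> trees N D"
  shows "(\<Sum>k\<le>D. chi k T) = N" "(\<Sum>k\<le>D. k * chi k T) + 1 = N" "N \<ge> 1" "chi 0 T \<ge> 1"
proof -
  have dl: "deg_le D T" and nv: "nverts T = N" using T by (auto simp: trees_def)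
  have m: "mset (pre T) = cm (\<lambda>k. chi k T) D" by (rule mset_pre_cm[OF dl])
  have "size (mset (pre T)) = N" using length_pre[of T] nv by simp
  then show s1: "(\<Sum>k\<le>D. chi k T) = N" using m size_cm by metis
  have "sum_mset (mset (pre T)) + 1 = N" using sum_list_pre[of T] nv by (simp add: sum_mset_sum_list)
  then show s2: "(\<Sum>k\<le>D. k * chi k T) + 1 = N" using m summ_cm by metis
  show "N \<ge> 1" using s2 by simp
  show "chi 0 T \<ge> 1"
  proof (rule ccontr)
    assume "\<not> chi 0 T \<ge> 1"
    then have z: "chi 0 T = 0" by simp
    have "(\<Sum>k\<le>D. chi k T) \<le> (\<Sum>k\<le>D. k * chi k T)"
    proof (rule sum_mono)
      fix k assume "k \<in> {..D}"
      show "chi k T \<le> k * chi k T" using z by (cases k) auto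
    qed
    then show False using s1 s2 by simp
  qed
qed

lemma Tset_sub_trees: "T \<in> trees N D \<Longrightarrow> t \<in> Tset (mset (pre T)) \<Longrightarrow> t \<in> trees N D \<and> (\<forall>k. chi k t = chi k T)"
proof -
  assume T: "T \<in> trees N D" and t: "t \<in> Tset (mset (pre T))"
  then have m: "mset (pre t) = mset (pre T)" by (simp add: Tset_def)
  have "length (pre t) = length (pre T)" using m by (metis size_mset)
  then have "nverts t = N" using T by (simp add: length_pre trees_def)
  moreover have "set (pre t) = set (pre T)" using m by (metis set_mset_mset)
  then have "deg_le D t" using T by (simp add: deg_le_pre trees_def)
  moreover have "chi k t = chi k T" for k using m count_pre by metis
  ultimately show ?thesis by (simp add: trees_def)
qed

lemma finite_trees: "finite (trees N D)"
proof -
  have "pre ` trees N D \<subseteq> {w. set w \<subseteq> {..D} \<and> length w = N}"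
    by (auto simp: trees_def length_pre deg_le_pre)
  moreover have "finite {w. set w \<subseteq> {..D} \<and> length w = N}"
    by (rule finite_lists_length_eq) simp
  ultimately show ?thesis using finite_imageD inj_pre finite_subset by (metis inj_on_subset subset_UNIV)
qed



lemma xlogx_eq: "xlogx x = x * ln x"
  by (simp add: xlogx_def)

lemma ln_ge_1_minus_inv: "0 < x \<Longrightarrow> 1 - 1 / x \<le> ln (x::real)"
proof -
  assume x: "0 < x"
  have "ln (1 / x) \<le> 1 / x - 1" using ln_le_minus_one[of "1/x"] x by simp
  then show ?thesis using x by (simp add: ln_div)
qed

lemma n_ln_step: "real n * ln (real n + 1) \<le> real n * ln (real n) + 1"
proof (cases "n = 0")
  case False
  then have n: "real n > 0" by simp
  have "1 + 1 / real n = (real n + 1) / real n" using n by (simp add: field_simps)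
  then have "ln (real n + 1) - ln (real n) = ln (1 + 1 / real n)"
    using n by (simp add: ln_div)
  also have "\<dots> \<le> 1 / real n" by (rule ln_add_one_self_le_self) simp
  finally have "real n * (ln (real n + 1) - ln (real n)) \<le> real n * (1 / real n)"
    using n by (intro mult_left_mono) auto
  then show ?thesis using n by (simp add: algebra_simps)
qed simp

lemma ln_fact_lower: "xlogx (real n) - real n \<le> ln (fact n)"
proof (induction n)
  case (Suc n)
  have "ln (fact (Suc n)) = ln (real n + 1) + ln (fact n)"
    by (simp add: ln_mult fact_gt_zero)
  moreover have "xlogx (real (Suc n)) - real (Suc n) \<le> ln (real n + 1) + (xlogx (real n) - real n)"
    using n_ln_step[of n] by (simp add: xlogx_eq algebra_simps)
  ultimately show ?case using Suc.IH by simp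
qed (simp add: xlogx_def)

lemma ln_fact_upper0: "ln (fact n) \<le> xlogx (real n + 1) - real n"
proof (induction n)
  case (Suc n)
  have "ln (fact (Suc n)) = ln (real n + 1) + ln (fact n)"
    by (simp add: ln_mult fact_gt_zero)
  have key: "1 \<le> (real n + 2) * (ln (real n + 2) - ln (real n + 1))"
  proof -
    have "1 - 1 / ((real n + 2) / (real n + 1)) \<le> ln ((real n + 2) / (real n + 1))"
      by (rule ln_ge_1_minus_inv) simp
    then have "1 / (real n + 2) \<le> ln (real n + 2) - ln (real n + 1)"
      by (simp add: ln_div field_simps)
    then have "(real n + 2) * (1 / (real n + 2)) \<le> (real n + 2) * (ln (real n + 2) - ln (real n + 1))"
      by (intro mult_left_mono) auto
    then show ?thesis by simp
  qed
  have "ln (fact (Suc n)) \<le> ln (real n + 1) + (xlogx (real n + 1) - real n)"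
    using Suc.IH \<open>ln (fact (Suc n)) = _\<close> by simp
  also have "\<dots> \<le> xlogx (real (Suc n) + 1) - real (Suc n)"
    using key by (simp add: xlogx_eq algebra_simps)
  finally show ?case .
qed (simp add: xlogx_def)

lemma ln_fact_upper: "ln (fact n) \<le> xlogx (real n) - real n + 1 + ln (real n + 1)"
proof -
  have "xlogx (real n + 1) \<le> xlogx (real n) + 1 + ln (real n + 1)"
    using n_ln_step[of n] by (simp add: xlogx_eq algebra_simps)
  then show ?thesis using ln_fact_upper0[of n] by simp
qed

definition ent :: "nat \<Rightarrow> (nat \<Rightarrow> real) \<Rightarrow> real" where
  "ent D v = - (\<Sum>k\<le>D. xlogx (v k))"

lemma ent_scale:
  fixes c :: "nat \<Rightarrow> nat"
  assumes "(\<Sum>k\<le>D. c k) = N" "N \<ge> 1"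
  shows "real N * ent D (\<lambda>k. real (c k) / real N) = xlogx (real N) - (\<Sum>k\<le>D. xlogx (real (c k)))"
proof -
  have N: "real N > 0" using assms by simp
  have t: "real N * xlogx (real (c k) / real N) = xlogx (real (c k)) - real (c k) * ln (real N)" for k
  proof (cases "c k = 0")
    case False
    then show ?thesis using N by (simp add: xlogx_eq ln_div field_simps)
  qed (simp add: xlogx_def)
  have "real N * ent D (\<lambda>k. real (c k) / real N) = - (\<Sum>k\<le>D. real N * xlogx (real (c k) / real N))"
    by (simp add: ent_def sum_distrib_left)
  also have "\<dots> = - (\<Sum>k\<le>D. xlogx (real (c k))) + (\<Sum>k\<le>D. real (c k)) * ln (real N)"
    by (simp add: t sum_subtractf sum_distrib_right)
  also have "(\<Sum>k\<le>D. real (c k)) = real N" using assms(1) by (metis of_nat_sum)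
  finally show ?thesis by (simp add: xlogx_eq)
qed

lemma multinom_bounds:
  fixes c :: "nat \<Rightarrow> nat"
  assumes cs: "(\<Sum>k\<le>D. c k) = N" and N1: "N \<ge> 1"
  shows "ln (fact N / (\<Prod>k\<le>D. fact (c k))) \<le> 1 + ln (real N + 1) + real N * ent D (\<lambda>k. real (c k) / real N)"
    and "real N * ent D (\<lambda>k. real (c k) / real N) - real (D + 1) * (1 + ln (real N + 1))
           \<le> ln (fact N / (\<Prod>k\<le>D. fact (c k)))"
proof -
  have eq: "ln (fact N / (\<Prod>k\<le>D. fact (c k)) :: real) = ln (fact N) - (\<Sum>k\<le>D. ln (fact (c k)))"
    by (simp add: ln_div ln_prod fact_gt_zero prod_pos)
  have sr: "(\<Sum>k\<le>D. real (c k)) = real N" using cs by (metis of_nat_sum)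
  have ck: "c k \<le> N" if "k \<le> D" for k
    using cs that by (metis finite_atMost atMost_iff member_le_sum zero_le)
  note es = ent_scale[OF cs N1]
  have "(\<Sum>k\<le>D. ln (fact (c k))) \<ge> (\<Sum>k\<le>D. xlogx (real (c k)) - real (c k))"
    by (rule sum_mono) (rule ln_fact_lower)
  then have "(\<Sum>k\<le>D. ln (fact (c k))) \<ge> (\<Sum>k\<le>D. xlogx (real (c k))) - real N"
    using sr by (simp add: sum_subtractf)
  then show "ln (fact N / (\<Prod>k\<le>D. fact (c k))) \<le> 1 + ln (real N + 1) + real N * ent D (\<lambda>k. real (c k) / real N)"
    using eq es ln_fact_upper[of N] by simp
  have "(\<Sum>k\<le>D. ln (fact (c k))) \<le> (\<Sum>k\<le>D. xlogx (real (c k)) - real (c k) + (1 + ln (real N + 1)))"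
  proof (rule sum_mono)
    fix k assume k: "k \<in> {..D}"
    have "ln (real (c k) + 1) \<le> ln (real N + 1)" using ck[of k] k by simp
    then show "ln (fact (c k)) \<le> xlogx (real (c k)) - real (c k) + (1 + ln (real N + 1))"
      using ln_fact_upper[of "c k"] by linarith
  qed
  then have "(\<Sum>k\<le>D. ln (fact (c k))) \<le> (\<Sum>k\<le>D. xlogx (real (c k))) - real N + real (D+1) * (1 + ln (real N + 1))"
    using sr by (simp add: sum.distrib sum_subtractf)
  then show "real N * ent D (\<lambda>k. real (c k) / real N) - real (D + 1) * (1 + ln (real N + 1))
           \<le> ln (fact N / (\<Prod>k\<le>D. fact (c k)))"
    using eq es ln_fact_lower[of N] by simp
qed

lemma xlogx_fun: "xlogx = (\<lambda>x. x * ln x)"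
  by (rule ext) (simp add: xlogx_eq)

lemma cont_xlogx: "continuous_on {0..1} xlogx"
proof -
  have "continuous (at x within {0..1}) (\<lambda>x. x * ln x)" if x: "x \<in> {0..1}" for x :: real
  proof (cases "x = 0")
    case True
    have "((\<lambda>x::real. x * ln x) \<longlongrightarrow> 0) (at_right 0)" by real_asymp
    then show ?thesis using True by (simp add: continuous_within at_within_Icc_at_right)
  next
    case False
    then have "x > 0" using x by simp
    then have "isCont (\<lambda>x. x * ln x) x" by (intro continuous_intros) auto
    then show ?thesis using continuous_at_imp_continuous_at_within by blast
  qed
  then show ?thesis unfolding xlogx_fun by (simp add: continuous_on_eq_continuous_within)
qed

lemma unif_xlogx:
  assumes "e > 0"
  shows "\<exists>d>0. \<forall>u\<in>{0..1}. \<forall>v\<in>{0..1}. \<bar>u - v\<bar> < d \<longrightarrow> \<bar>xlogx u - xlogx v\<bar> < e"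
proof -
  have "uniformly_continuous_on {0..1::real} xlogx"
    by (rule compact_uniformly_continuous[OF cont_xlogx compact_Icc])
  then obtain d where "d > 0" "\<forall>u\<in>{0..1}. \<forall>v\<in>{0..1}. dist v u < d \<longrightarrow> dist (xlogx v) (xlogx u) < e"
    using assms unfolding uniformly_continuous_on_def by blast
  then show ?thesis by (metis dist_real_def abs_minus_commute)
qed

lemma xlogx_bounds: "0 \<le> u \<Longrightarrow> u \<le> 1 \<Longrightarrow> -1 \<le> xlogx u \<and> xlogx u \<le> 0"
proof -
  assume u: "0 \<le> u" "u \<le> 1"
  show ?thesis
  proof (cases "u = 0")
    case False
    then have up: "u > 0" using u by simp
    have "ln u \<le> 0" using u up by simp
    then have a: "u * ln u \<le> 0" using up by (simp add: mult_nonneg_nonpos)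
    have "1 - 1/u \<le> ln u" by (rule ln_ge_1_minus_inv[OF up])
    then have "u * (1 - 1/u) \<le> u * ln u" using up by (intro mult_left_mono) auto
    then have "u - 1 \<le> u * ln u" using up by (simp add: algebra_simps)
    then show ?thesis using a u by (simp add: xlogx_eq)
  qed (simp add: xlogx_def)
qed

lemma ent_bounds:
  assumes "\<And>k. k \<le> D \<Longrightarrow> 0 \<le> v k \<and> v k \<le> 1"
  shows "0 \<le> ent D v" "ent D v \<le> real (D + 1)"
proof -
  have "(\<Sum>k\<le>D. xlogx (v k)) \<le> (\<Sum>k\<le>D. 0)"
    by (rule sum_mono) (use assms xlogx_bounds in auto)
  then show "0 \<le> ent D v" by (simp add: ent_def)
  have "(\<Sum>k\<le>D. -1) \<le> (\<Sum>k\<le>D. xlogx (v k))"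
    by (rule sum_mono) (use assms xlogx_bounds in auto)
  then show "ent D v \<le> real (D + 1)" by (simp add: ent_def)
qed

lemma ent_close:
  assumes e: "e > 0"
  shows "\<exists>d>0. \<forall>u v. (\<forall>k\<le>D. 0 \<le> u k \<and> u k \<le> 1 \<and> 0 \<le> v k \<and> v k \<le> 1 \<and> \<bar>u k - v k\<bar> < d)
          \<longrightarrow> ent D u \<le> ent D v + e"
proof -
  have e': "e / real (D + 1) > 0" using e by simp
  obtain d where d: "d > 0" "\<forall>u\<in>{0..1}. \<forall>v\<in>{0..1}. \<bar>u - v\<bar> < d \<longrightarrow> \<bar>xlogx u - xlogx v\<bar> < e / real (D + 1)"
    using unif_xlogx[OF e'] by blast
  have "ent D u \<le> ent D v + e" if h: "\<forall>k\<le>D. 0 \<le> u k \<and> u k \<le> 1 \<and> 0 \<le> v k \<and> v k \<le> 1 \<and> \<bar>u k - v k\<bar> < d" for u v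
  proof -
    have "(\<Sum>k\<le>D. xlogx (v k) - xlogx (u k)) \<le> (\<Sum>k\<le>D. e / real (D + 1))"
    proof (rule sum_mono)
      fix k assume "k \<in> {..D}"
      then have "\<bar>xlogx (u k) - xlogx (v k)\<bar> < e / real (D + 1)" using h d by auto
      then show "xlogx (v k) - xlogx (u k) \<le> e / real (D + 1)" by simp
    qed
    also have "\<dots> = e" by simp
    finally show ?thesis by (simp add: ent_def sum_subtractf)
  qed
  then show ?thesis using d by blast
qed

lemma tendsto_ent:
  assumes lim: "\<And>k. k \<le> D \<Longrightarrow> ((\<lambda>n. v n k) \<longlongrightarrow> p k) F"
    and ev: "\<And>k. k \<le> D \<Longrightarrow> eventually (\<lambda>n. v n k \<in> {0..1}) F"
    and p: "\<And>k. k \<le> D \<Longrightarrow> p k \<in> {0..1}"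
  shows "((\<lambda>n. ent D (v n)) \<longlongrightarrow> ent D p) F"
proof -
  have "((\<lambda>n. xlogx (v n k)) \<longlongrightarrow> xlogx (p k)) F" if k: "k \<le> D" for k
    using continuous_on_tendsto_compose[OF cont_xlogx lim[OF k] p[OF k] ev[OF k]] by simp
  then show ?thesis unfolding ent_def by (intro tendsto_minus tendsto_sum) auto
qed

lemma err_tendsto:
  "((\<lambda>N::nat. (a * ln (real N + 1) + b + ln (real N)) / real N) \<longlongrightarrow> 0) sequentially"
proof -
  have 1: "((\<lambda>N::nat. ln (real N + 1) / real N) \<longlongrightarrow> 0) sequentially" by real_asymp
  have 2: "((\<lambda>N::nat. 1 / real N) \<longlongrightarrow> 0) sequentially" by real_asymp
  have 3: "((\<lambda>N::nat. ln (real N) / real N) \<longlongrightarrow> 0) sequentially" by real_asymp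
  have "((\<lambda>N::nat. a * (ln (real N + 1) / real N) + b * (1 / real N) + ln (real N) / real N) \<longlongrightarrow> a * 0 + b * 0 + 0) sequentially"
    by (intro tendsto_add tendsto_mult 1 2 3 tendsto_const)
  then show ?thesis by (simp add: add_divide_distrib)
qed


lemma cont_coord: "continuous_on UNIV (\<lambda>x::nat \<Rightarrow> real. x k)"
  by simp

lemma closed_cube: "closed (cube D)"
proof -
  have "cube D = (\<Inter>k\<in>{..D}. {x. 0 \<le> x k} \<inter> {x. x k \<le> 1}) \<inter> (\<Inter>k\<in>{D<..}. {x. x k = 0})"
    by (auto simp: cube_def)
  moreover have "closed \<dots>"
    by (intro closed_Int closed_INT ballI closed_Collect_le closed_Collect_eq cont_coord continuous_on_const)
  ultimately show ?thesis by simp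
qed

lemma closed_MD: "closed (MD D)"
proof -
  have "MD D = cube D \<inter> {p. (\<Sum>k\<le>D. p k) = 1} \<inter> {p. (\<Sum>k=1..D. real k * p k) = 1}"
    by (auto simp: cube_def MD_def)
  moreover have "closed \<dots>"
    by (intro closed_Int closed_cube closed_Collect_eq continuous_on_sum continuous_on_mult
        cont_coord continuous_on_const)
  ultimately show ?thesis by simp
qed

lemma cont_fst_coord: "continuous_on UNIV (\<lambda>z::(nat \<Rightarrow> real) \<times> (nat \<Rightarrow> real). fst z k)"
  using continuous_on_compose[OF continuous_on_fst[OF continuous_on_id] continuous_on_subset[OF cont_coord[of k]]]
  by (simp add: o_def)

lemma cont_snd_coord: "continuous_on UNIV (\<lambda>z::(nat \<Rightarrow> real) \<times> (nat \<Rightarrow> real). snd z k)"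
  using continuous_on_compose[OF continuous_on_snd[OF continuous_on_id] continuous_on_subset[OF cont_coord[of k]]]
  by (simp add: o_def)

lemma open_dist_set: "open {(x::nat\<Rightarrow>real, y::nat\<Rightarrow>real). (\<Sum>k\<le>D. \<bar>x k - y k\<bar>) > c}"
proof -
  have "{(x::nat\<Rightarrow>real, y::nat\<Rightarrow>real). (\<Sum>k\<le>D. \<bar>x k - y k\<bar>) > c} =
        {z. c < (\<Sum>k\<le>D. \<bar>fst z k - snd z k\<bar>)}" by auto
  moreover have "open \<dots>"
    by (intro open_Collect_less continuous_on_const continuous_on_sum continuous_on_rabs
        continuous_on_diff cont_fst_coord cont_snd_coord)
  ultimately show ?thesis by simp
qed

lemma meas_fst: "fst \<in> borel_measurable (borel :: ((nat \<Rightarrow> real) \<times> (nat \<Rightarrow> real)) measure)"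
  by (intro borel_measurable_continuous_onI continuous_on_fst continuous_on_id)

lemma meas_snd: "snd \<in> borel_measurable (borel :: ((nat \<Rightarrow> real) \<times> (nat \<Rightarrow> real)) measure)"
  by (intro borel_measurable_continuous_onI continuous_on_snd continuous_on_id)

lemma tendsto_fun_componentwise:
  fixes f :: "'a \<Rightarrow> nat \<Rightarrow> real"
  assumes "\<And>i. ((\<lambda>n. f n i) \<longlongrightarrow> l i) F"
  shows "(f \<longlongrightarrow> l) F"
proof -
  have "limitin (product_topology (\<lambda>i. euclidean) UNIV) f l F"
    using assms by (subst limitin_componentwise) auto
  then show ?thesis by (simp add: euclidean_product_topology)
qed


lemma ent_emp: "T \<in> trees N D \<Longrightarrow> ent D (emp_deg D N T) = ent D (\<lambda>k. real (chi k T) / real N)"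
  unfolding ent_def emp_deg_def by (intro arg_cong[where f = uminus] sum.cong) auto

lemma class_bounds:
  assumes T: "T \<in> trees N D"
  shows "finite (Tset (mset (pre T)))" "card (Tset (mset (pre T))) \<ge> 1"
    "ln (real (card (Tset (mset (pre T))))) \<le> 1 + ln (real N + 1) + real N * ent D (emp_deg D N T)"
    "real N * ent D (emp_deg D N T) - real (D + 1) * (1 + ln (real N + 1)) - ln (real N)
       \<le> ln (real (card (Tset (mset (pre T)))))"
proof -
  note tf = tree_facts[OF T]
  define c where "c k = chi k T" for k
  have dl: "deg_le D T" using T by (simp add: trees_def)
  have A: "mset (pre T) = cm c D" unfolding c_def by (rule mset_pre_cm[OF dl])
  have sA: "size (cm c D) = N" using tf(1) by (simp add: size_cm c_def)
  have smA: "sum_mset (cm c D) + 1 = N" using tf(2) by (simp add: summ_cm c_def)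
  note tw = Tset_words[OF sA tf(3) smA]
  show fin: "finite (Tset (mset (pre T)))" using tw(1) A by simp
  have "T \<in> Tset (mset (pre T))" by (simp add: Tset_def)
  then show c1: "card (Tset (mset (pre T))) \<ge> 1" using fin
    by (metis One_nat_def Suc_leI card_gt_0_iff empty_iff)
  have W: "real (card (permutations_of_multiset (cm c D))) = fact N / (\<Prod>k\<le>D. fact (c k))"
    using card_cm[of c D] tf(1) by (simp add: c_def)
  have cs: "(\<Sum>k\<le>D. c k) = N" using tf(1) by (simp add: c_def)
  note mb = multinom_bounds[OF cs tf(3)]
  have ee: "ent D (emp_deg D N T) = ent D (\<lambda>k. real (c k) / real N)"
    using ent_emp[OF T] by (simp add: c_def)
  have Wpos: "real (card (permutations_of_multiset (cm c D))) > 0"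
    using card_gt_0_iff by fastforce
  have "ln (real (card (Tset (mset (pre T))))) \<le> ln (real (card (permutations_of_multiset (cm c D))))"
    using tw(2) A c1 by simp
  then show "ln (real (card (Tset (mset (pre T))))) \<le> 1 + ln (real N + 1) + real N * ent D (emp_deg D N T)"
    using mb(1) W ee by simp
  have Np: "real N > 0" using tf(3) by simp
  have "real (card (permutations_of_multiset (cm c D))) \<le> real N * real (card (Tset (mset (pre T))))"
    using tw(3) A by (metis of_nat_le_iff of_nat_mult)
  then have "ln (real (card (permutations_of_multiset (cm c D)))) \<le> ln (real N * real (card (Tset (mset (pre T)))))"
    using Wpos by simp
  also have "\<dots> = ln (real N) + ln (real (card (Tset (mset (pre T)))))"
    using Np c1 by (simp add: ln_mult)
  finally show "real N * ent D (emp_deg D N T) - real (D + 1) * (1 + ln (real N + 1)) - ln (real N)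
       \<le> ln (real (card (Tset (mset (pre T)))))"
    using mb(2) W ee by simp
qed

lemma types_card: "card ((\<lambda>T. mset (pre T)) ` trees N D) \<le> (N + 1) ^ (D + 1)"
proof -
  let ?I = "(\<lambda>T. mset (pre T)) ` trees N D"
  let ?f = "\<lambda>A. restrict (count A) {..D}"
  have sub: "\<And>A. A \<in> ?I \<Longrightarrow> set_mset A \<subseteq> {..D} \<and> size A = N"
    by (auto simp: trees_def deg_le_pre length_pre)
  have inj: "inj_on ?f ?I"
  proof (rule inj_onI)
    fix A B assume A: "A \<in> ?I" and B: "B \<in> ?I" and e: "?f A = ?f B"
    show "A = B"
    proof (rule multiset_eqI)
      fix x show "count A x = count B x"
      proof (cases "x \<le> D")
        case True then show ?thesis using e by (metis atMost_iff restrict_apply')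
      next
        case False
        then have "x \<notin># A" "x \<notin># B" using sub[OF A] sub[OF B] by auto
        then show ?thesis by (simp add: not_in_iff)
      qed
    qed
  qed
  have img: "?f ` ?I \<subseteq> PiE {..D} (\<lambda>_. {..N})"
  proof
    fix g assume "g \<in> ?f ` ?I"
    then obtain A where A: "A \<in> ?I" "g = ?f A" by blast
    have "count A k \<le> N" for k using sub[OF A(1)] count_le_size[of A k] by simp
    then show "g \<in> PiE {..D} (\<lambda>_. {..N})" using A by auto
  qed
  have "card ?I \<le> card (PiE {..D} (\<lambda>_. {..N::nat}))"
    by (rule card_inj_on_le[OF inj img]) (simp add: finite_PiE)
  also have "\<dots> = (N + 1) ^ (D + 1)" by (simp add: card_PiE)
  finally show ?thesis .
qed

lemma count_upper:
  assumes S: "S \<subseteq> trees N D" "S \<noteq> {}" and M: "\<And>T. T \<in> S \<Longrightarrow> ent D (emp_deg D N T) \<le> M"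
  shows "ln (real (card S)) \<le> real (D + 1) * ln (real N + 1) + 1 + ln (real N + 1) + real N * M"
proof -
  define B where "B = exp (1 + ln (real N + 1) + real N * M)"
  have Bp: "B > 0" by (simp add: B_def)
  have cB: "real (card (Tset (mset (pre T)))) \<le> B" if "T \<in> S" for T
  proof -
    have T: "T \<in> trees N D" using that S by auto
    note cb = class_bounds[OF T]
    have "real N * ent D (emp_deg D N T) \<le> real N * M" using M[OF that] by (simp add: mult_left_mono)
    then have "ln (real (card (Tset (mset (pre T))))) \<le> ln B"
      using cb(3) by (simp add: B_def)
    then show ?thesis using cb(2) Bp by simp
  qed
  let ?I = "(\<lambda>T. mset (pre T)) ` S"
  have finS: "finite S" using finite_trees finite_subset S(1) by blast
  have finI: "finite ?I" using finS by simp
  have cov: "S \<subseteq> (\<Union>A\<in>?I. Tset A)" by (auto simp: Tset_def)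
  have finT: "\<forall>A\<in>?I. finite (Tset A)" using class_bounds(1) S(1) by blast
  have finU: "finite (\<Union>A\<in>?I. Tset A)" by (rule finite_UN_I[OF finI]) (use finT in blast)
  have "card S \<le> card (\<Union>A\<in>?I. Tset A)" by (rule card_mono[OF finU cov])
  also have "\<dots> \<le> (\<Sum>A\<in>?I. card (Tset A))" by (rule card_UN_le[OF finI])
  finally have "real (card S) \<le> (\<Sum>A\<in>?I. real (card (Tset A)))" by (metis of_nat_le_iff of_nat_sum)
  also have "\<dots> \<le> (\<Sum>A\<in>?I. B)" by (rule sum_mono) (use cB in auto)
  also have "\<dots> = real (card ?I) * B" by simp
  also have "\<dots> \<le> real ((N + 1) ^ (D + 1)) * B"
  proof -
    have "card ?I \<le> card ((\<lambda>T. mset (pre T)) ` trees N D)"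
      by (rule card_mono) (use S(1) finite_trees in auto)
    then have "card ?I \<le> (N + 1) ^ (D + 1)" using types_card le_trans by blast
    then have "real (card ?I) \<le> real ((N + 1) ^ (D + 1))" by (simp only: of_nat_le_iff)
    then show ?thesis using Bp by (intro mult_right_mono) auto
  qed
  finally have le: "real (card S) \<le> real ((N + 1) ^ (D + 1)) * B" .
  have cS: "card S > 0" using finS S(2) by (simp add: card_gt_0_iff)
  have l1: "ln (real (card S)) \<le> ln (real ((N + 1) ^ (D + 1)) * B)" using le cS by simp
  have l2: "ln (real ((N + 1) ^ (D + 1)) * B) = ln (real ((N + 1) ^ (D + 1))) + ln B"
    using Bp by (intro ln_mult_pos) (simp_all only: of_nat_0_less_iff zero_less_power zero_less_Suc Suc_eq_plus1[symmetric])
  have l3: "ln (real ((N + 1) ^ (D + 1))) = real (D + 1) * ln (real N + 1)"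
    by (subst of_nat_power, subst ln_realpow) auto
  have l4: "ln B = 1 + ln (real N + 1) + real N * M" by (simp add: B_def)
  show ?thesis using l1 l2 l3 l4 by linarith
qed

lemma count_lower:
  assumes T: "T \<in> trees N D" and sub: "Tset (mset (pre T)) \<subseteq> S" and fin: "finite S"
  shows "real N * ent D (emp_deg D N T) - real (D + 1) * (1 + ln (real N + 1)) - ln (real N)
       \<le> ln (real (card S))"
proof -
  note cb = class_bounds[OF T]
  have "card (Tset (mset (pre T))) \<le> card S" by (rule card_mono[OF fin sub])
  then have "ln (real (card (Tset (mset (pre T))))) \<le> ln (real (card S))" using cb(2) by simp
  then show ?thesis using cb(4) by simp
qed

lemma tree_exists:
  assumes cs: "(\<Sum>k\<le>D. c k) = N" and cs2: "(\<Sum>k\<le>D. k * c k) + 1 = N"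
  shows "\<exists>T \<in> trees N D. \<forall>k\<le>D. chi k T = c k"
proof -
  have N1: "N \<ge> 1" using cs2 by simp
  have sA: "size (cm c D) = N" using cs by (simp add: size_cm)
  have smA: "sum_mset (cm c D) + 1 = N" using cs2 by (simp add: summ_cm)
  note tw = Tset_words[OF sA N1 smA]
  have "card (permutations_of_multiset (cm c D)) > 0"
    using card_gt_0_iff by fastforce
  then have "card (Tset (cm c D)) > 0" using tw(3) by (cases "card (Tset (cm c D)) = 0") auto
  then obtain t where t: "t \<in> Tset (cm c D)" by (metis card.empty equals0I less_irrefl)
  then have m: "mset (pre t) = cm c D" by (simp add: Tset_def)
  have "nverts t = N" using m sA length_pre by (metis size_mset)
  moreover have "deg_le D t"
  proof -
    have "set (pre t) \<subseteq> {..D}" using m set_cm by (metis set_mset_mset)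
    then show ?thesis by (auto simp: deg_le_pre)
  qed
  moreover have "\<forall>k\<le>D. chi k t = c k" using m count_pre count_cm by metis
  ultimately show ?thesis by (auto simp: trees_def)
qed


definition yv :: "nat \<Rightarrow> nat \<Rightarrow> ptree \<Rightarrow> nat \<Rightarrow> real" where
  "yv D N T = (\<lambda>k. if k \<le> D then (real (chi k T) + (if k = 1 then 1 else 0) - (if k = 0 then 1 else 0)) / real N else 0)"

lemma sum_split01:
  fixes f :: "nat \<Rightarrow> 'a::comm_monoid_add"
  assumes "D \<ge> 1" shows "(\<Sum>k\<le>D. f k) = f 0 + f 1 + (\<Sum>k=2..D. f k)"
proof -
  have "(\<Sum>k\<le>D. f k) = (\<Sum>k=0..D. f k)" by (simp add: atMost_atLeast0)
  also have "\<dots> = f 0 + (\<Sum>k=Suc 0..D. f k)" by (rule sum.atLeast_Suc_atMost) simp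
  also have "(\<Sum>k=Suc 0..D. f k) = f 1 + (\<Sum>k=Suc 1..D. f k)"
    using assms by (subst sum.atLeast_Suc_atMost) auto
  finally show ?thesis by (simp add: add.assoc numeral_2_eq_2)
qed

lemma sum_split1:
  fixes f :: "nat \<Rightarrow> 'a::comm_monoid_add"
  assumes "D \<ge> 1" shows "(\<Sum>k=1..D. f k) = f 1 + (\<Sum>k=2..D. f k)"
  using assms by (subst sum.atLeast_Suc_atMost) (auto simp: numeral_2_eq_2)

lemma yv_emp_diff:
  "yv D N T k - emp_deg D N T k = (if k \<le> D then ((if k = 1 then 1 else 0) - (if k = 0 then 1 else 0)) / real N else 0)"
  by (simp add: yv_def emp_deg_def diff_divide_distrib add_divide_distrib)

lemma yv_emp_close: "k \<le> D \<Longrightarrow> \<bar>emp_deg D N T k - yv D N T k\<bar> \<le> 1 / real N"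
proof -
  assume k: "k \<le> D"
  have "\<bar>yv D N T k - emp_deg D N T k\<bar> \<le> 1 / real N"
    using yv_emp_diff[of D N T k] k by (cases "k = 0"; cases "k = 1") auto
  then show ?thesis by (simp add: abs_minus_commute)
qed

lemma yv_cls: "t \<in> Tset (mset (pre T)) \<Longrightarrow> yv D N t = yv D N T \<and> emp_deg D N t = emp_deg D N T"
proof -
  assume "t \<in> Tset (mset (pre T))"
  then have e: "chi k t = chi k T" for k by (metis Tset_def count_pre mem_Collect_eq)
  show ?thesis unfolding yv_def emp_deg_def e by simp
qed

lemma emp_cube:
  assumes T: "T \<in> trees N D" shows "emp_deg D N T \<in> cube D"
proof -
  note tf = tree_facts[OF T]
  have "chi k T \<le> N" if "k \<le> D" for k
  proof -
    have "chi k T \<le> (\<Sum>k\<le>D. chi k T)" using that by (intro member_le_sum) auto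
    then show ?thesis using tf(1) by simp
  qed
  then show ?thesis using tf(3) by (auto simp: cube_def emp_deg_def)
qed


lemma yv_MD:
  assumes T: "T \<in> trees N D" and D1: "D \<ge> 1" shows "yv D N T \<in> MD D"
proof -
  note tf = tree_facts[OF T]
  have Np: "real N > 0" using tf(3) by simp
  have "real (\<Sum>k\<le>D. chi k T) = real N" using tf(1) by (simp only:)
  then have s1: "(\<Sum>k\<le>D. real (chi k T)) = real N" by (simp add: of_nat_sum)
  have "real ((\<Sum>k\<le>D. k * chi k T) + 1) = real N" using tf(2) by (simp only:)
  then have s2: "(\<Sum>k\<le>D. real k * real (chi k T)) + 1 = real N"
    by (simp add: of_nat_sum)
  have s1': "real (chi 0 T) + real (chi 1 T) + (\<Sum>k=2..D. real (chi k T)) = real N"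
    using s1 sum_split01[OF D1, of "\<lambda>k. real (chi k T)"] by simp
  have s2': "real (chi 1 T) + (\<Sum>k=2..D. real k * real (chi k T)) + 1 = real N"
    using s2 sum_split01[OF D1, of "\<lambda>k. real k * real (chi k T)"] by simp
  have nn: "(\<Sum>k=2..D. real (chi k T)) \<ge> 0" by (simp add: sum_nonneg)
  have c0: "real (chi 0 T) \<ge> 1" using tf(4) by simp
  have ck: "real (chi k T) \<le> real N" if "k \<le> D" for k
  proof -
    have "chi k T \<le> (\<Sum>k\<le>D. chi k T)" using that by (intro member_le_sum) auto
    then show ?thesis using tf(1) by simp
  qed
  have bnd: "0 \<le> yv D N T k \<and> yv D N T k \<le> 1" if k: "k \<le> D" for k
  proof -
    have "0 \<le> real (chi k T) + (if k = 1 then 1 else 0) - (if k = 0 then 1 else 0)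
          \<and> real (chi k T) + (if k = 1 then 1 else 0) - (if k = 0 then 1 else 0) \<le> real N"
      using c0 ck[OF k] s1' nn by (cases "k = 0"; cases "k = 1") auto
    then show ?thesis using k Np by (simp add: yv_def divide_le_eq_1)
  qed
  have y0: "yv D N T 0 = (real (chi 0 T) - 1) / real N" by (simp add: yv_def)
  have y1: "yv D N T 1 = (real (chi 1 T) + 1) / real N" using D1 by (simp add: yv_def)
  have y2: "(\<Sum>k=2..D. yv D N T k) = (\<Sum>k=2..D. real (chi k T)) / real N"
    by (simp add: yv_def sum_divide_distrib)
  have y3: "(\<Sum>k=2..D. real k * yv D N T k) = (\<Sum>k=2..D. real k * real (chi k T)) / real N"
    by (simp add: yv_def sum_divide_distrib)
  have sum1: "(\<Sum>k\<le>D. yv D N T k) = 1"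
  proof -
    have "(\<Sum>k\<le>D. yv D N T k) = yv D N T 0 + yv D N T 1 + (\<Sum>k=2..D. yv D N T k)"
      by (rule sum_split01[OF D1])
    also have "\<dots> = ((real (chi 0 T) - 1) + (real (chi 1 T) + 1) + (\<Sum>k=2..D. real (chi k T))) / real N"
      unfolding y0 y1 y2 by (simp add: add_divide_distrib diff_divide_distrib)
    also have "\<dots> = 1" using s1' Np by simp
    finally show ?thesis .
  qed
  have sum2: "(\<Sum>k=1..D. real k * yv D N T k) = 1"
  proof -
    have "(\<Sum>k=1..D. real k * yv D N T k) = real 1 * yv D N T 1 + (\<Sum>k=2..D. real k * yv D N T k)"
      by (rule sum_split1[OF D1])
    also have "\<dots> = ((real (chi 1 T) + 1) + (\<Sum>k=2..D. real k * real (chi k T))) / real N"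
      unfolding y1 y3 by (simp add: add_divide_distrib)
    also have "\<dots> = 1" using s2' Np by simp
    finally show ?thesis .
  qed
  have gt: "\<forall>k>D. yv D N T k = 0" by (simp add: yv_def)
  show ?thesis unfolding MD_def using bnd sum1 sum2 gt by blast
qed


lemma floor_frac_lim:
  assumes p: "0 \<le> p"
  shows "((\<lambda>N::nat. real (nat \<lfloor>real (N - 1) * p\<rfloor>) / real N) \<longlongrightarrow> p) sequentially"
proof (rule tendsto_sandwich)
  have e: "real (nat \<lfloor>real (N - 1) * p\<rfloor>) = of_int \<lfloor>real (N - 1) * p\<rfloor>" for N
    using p by simp
  show "eventually (\<lambda>N. p * (real (N - 1) / real N) - 1 / real N \<le> real (nat \<lfloor>real (N - 1) * p\<rfloor>) / real N) sequentially"
  proof (rule eventually_sequentiallyI[of 1])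
    fix N :: nat assume N: "N \<ge> 1"
    have "real (N - 1) * p - 1 \<le> of_int \<lfloor>real (N - 1) * p\<rfloor>" by linarith
    then have "real (N - 1) * p - 1 \<le> real (nat \<lfloor>real (N - 1) * p\<rfloor>)" using e[of N] by linarith
    then have "(real (N - 1) * p - 1) / real N \<le> real (nat \<lfloor>real (N - 1) * p\<rfloor>) / real N"
      by (rule divide_right_mono) simp
    moreover have "(real (N - 1) * p - 1) / real N = p * (real (N - 1) / real N) - 1 / real N"
      using N by (simp add: field_simps)
    ultimately show "p * (real (N - 1) / real N) - 1 / real N \<le> real (nat \<lfloor>real (N - 1) * p\<rfloor>) / real N"
      by simp
  qed
  show "eventually (\<lambda>N. real (nat \<lfloor>real (N - 1) * p\<rfloor>) / real N \<le> p * (real (N - 1) / real N)) sequentially"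
  proof (rule eventually_sequentiallyI[of 1])
    fix N :: nat assume N: "N \<ge> 1"
    have "of_int \<lfloor>real (N - 1) * p\<rfloor> \<le> real (N - 1) * p" by linarith
    then have "real (nat \<lfloor>real (N - 1) * p\<rfloor>) \<le> real (N - 1) * p" using e[of N] by linarith
    then have "real (nat \<lfloor>real (N - 1) * p\<rfloor>) / real N \<le> (real (N - 1) * p) / real N"
      by (rule divide_right_mono) simp
    then show "real (nat \<lfloor>real (N - 1) * p\<rfloor>) / real N \<le> p * (real (N - 1) / real N)"
      by (metis mult.commute times_divide_eq_right)
  qed
  have l1: "((\<lambda>N::nat. real (N - 1) / real N) \<longlongrightarrow> 1) sequentially"
  proof -
    have "((\<lambda>N::nat. 1 - 1 / real N) \<longlongrightarrow> 1) sequentially" by real_asymp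
    moreover have "eventually (\<lambda>N::nat. 1 - 1 / real N = real (N - 1) / real N) sequentially"
      by (rule eventually_sequentiallyI[of 1]) (simp add: of_nat_diff field_simps)
    ultimately show ?thesis by (rule Lim_transform_eventually)
  qed
  have l2: "((\<lambda>N::nat. 1 / real N) \<longlongrightarrow> 0) sequentially" by real_asymp
  show "((\<lambda>N. p * (real (N - 1) / real N) - 1 / real N) \<longlongrightarrow> p) sequentially"
    using tendsto_diff[OF tendsto_mult[OF tendsto_const l1] l2] by simp
  show "((\<lambda>N. p * (real (N - 1) / real N)) \<longlongrightarrow> p) sequentially"
    using tendsto_mult[OF tendsto_const l1] by simp
qed

lemma approx_seq:
  assumes D1: "D \<ge> 1" and p: "p \<in> MD D"
  shows "\<exists>T. (\<forall>N\<ge>1. T N \<in> trees N D) \<and> (\<forall>k. ((\<lambda>N. yv D N (T N) k) \<longlongrightarrow> p k) sequentially)"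
proof -
  from p have p01: "\<forall>k\<le>D. 0 \<le> p k \<and> p k \<le> 1" and pz: "\<forall>k>D. p k = 0"
    and ps: "(\<Sum>k\<le>D. p k) = 1" and pm: "(\<Sum>k=1..D. real k * p k) = 1" by (auto simp: MD_def)
  define m where "m N k = nat \<lfloor>real (N - 1) * p k\<rfloor>" for N k
  define S where "S N = (\<Sum>k=2..D. k * m N k)" for N
  define c where "c N k = (if k = 0 then (\<Sum>k=2..D. (k - 1) * m N k) + 1 else if k = 1 then N - 1 - S N else m N k)" for N k
  have pm2: "(\<Sum>k=2..D. real k * p k) = 1 - p 1" using pm sum_split1[OF D1, of "\<lambda>k. real k * p k"] by simp
  have ps2: "(\<Sum>k=2..D. p k) = 1 - p 0 - p 1" using ps sum_split01[OF D1, of p] by simp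
  have mle: "real (m N k) \<le> real (N - 1) * p k" if "k \<le> D" for N k
  proof -
    have x: "real (N - 1) * p k \<ge> 0" using p01 that by simp
    then have "real (m N k) = of_int \<lfloor>real (N - 1) * p k\<rfloor>" by (simp add: m_def)
    then show ?thesis by linarith
  qed
  have SN: "S N + 1 \<le> N" if N: "N \<ge> 1" for N
  proof -
    have "real (S N) = (\<Sum>k=2..D. real k * real (m N k))" by (simp add: S_def of_nat_sum)
    also have "\<dots> \<le> (\<Sum>k=2..D. real k * (real (N - 1) * p k))"
      by (rule sum_mono, rule mult_left_mono) (use mle in auto)
    also have "\<dots> = real (N - 1) * (\<Sum>k=2..D. real k * p k)"
      by (simp add: sum_distrib_left algebra_simps)
    also have "\<dots> = real (N - 1) * (1 - p 1)" by (simp add: pm2)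
    also have "\<dots> \<le> real (N - 1)" using p01 D1 by (simp add: mult_left_le)
    finally have "real (S N) \<le> real (N - 1)" .
    then show ?thesis using N by linarith
  qed
  have h0: "(\<Sum>k=2..D. (k - 1) * m N k) + (\<Sum>k=2..D. m N k) = S N" for N
  proof -
    have "(\<Sum>k=2..D. (k - 1) * m N k) + (\<Sum>k=2..D. m N k) = (\<Sum>k=2..D. (k - 1) * m N k + m N k)"
      by (simp add: sum.distrib)
    also have "\<dots> = (\<Sum>k=2..D. k * m N k)"
    proof (rule sum.cong)
      fix k assume "k \<in> {2..D}"
      then show "(k - 1) * m N k + m N k = k * m N k" by (cases k) auto
    qed simp
    finally show ?thesis by (simp add: S_def)
  qed
  have c2: "(\<Sum>k=2..D. f k * c N k) = (\<Sum>k=2..D. f k * m N k)" for f :: "nat \<Rightarrow> nat" and N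
    by (rule sum.cong) (auto simp: c_def)
  have csum: "(\<Sum>k\<le>D. c N k) = N" if N: "N \<ge> 1" for N
  proof -
    have "(\<Sum>k\<le>D. c N k) = c N 0 + c N 1 + (\<Sum>k=2..D. c N k)" by (rule sum_split01[OF D1])
    also have "(\<Sum>k=2..D. c N k) = (\<Sum>k=2..D. m N k)" using c2[of "\<lambda>_. 1" N] by simp
    finally show ?thesis using h0[of N] SN[OF N] by (simp add: c_def)
  qed
  have cmom: "(\<Sum>k\<le>D. k * c N k) + 1 = N" if N: "N \<ge> 1" for N
  proof -
    have "(\<Sum>k\<le>D. k * c N k) = 0 * c N 0 + 1 * c N 1 + (\<Sum>k=2..D. k * c N k)"
      by (rule sum_split01[OF D1])
    also have "(\<Sum>k=2..D. k * c N k) = S N" using c2[of "\<lambda>k. k" N] by (simp add: S_def)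
    finally show ?thesis using SN[OF N] by (simp add: c_def)
  qed
  have "\<forall>N. \<exists>T. N \<ge> 1 \<longrightarrow> T \<in> trees N D \<and> (\<forall>k\<le>D. chi k T = c N k)"
    using tree_exists[OF csum cmom] by blast
  then obtain T where T: "\<And>N. N \<ge> 1 \<Longrightarrow> T N \<in> trees N D \<and> (\<forall>k\<le>D. chi k (T N) = c N k)"
    by metis
  define r where "r N k = real (m N k) / real N" for N k
  have lr: "((\<lambda>N. r N k) \<longlongrightarrow> p k) sequentially" if "k \<le> D" for k
    unfolding r_def m_def by (rule floor_frac_lim) (use p01 that in auto)
  have lim: "((\<lambda>N. yv D N (T N) k) \<longlongrightarrow> p k) sequentially" for k
  proof -
    consider "k > D" | "k = 0" | "k = 1" | "2 \<le> k \<and> k \<le> D" by linarith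
    then show ?thesis
    proof cases
      case 1
      then show ?thesis using pz by (simp add: yv_def)
    next
      case 2
      have ev: "eventually (\<lambda>N. (\<Sum>k=2..D. (real k - 1) * r N k) = yv D N (T N) k) sequentially"
      proof (rule eventually_sequentiallyI[of 1])
        fix N :: nat assume N: "N \<ge> 1"
        have "yv D N (T N) k = real (\<Sum>k=2..D. (k - 1) * m N k) / real N"
          using T[OF N] 2 by (simp add: yv_def c_def)
        also have "\<dots> = (\<Sum>k=2..D. (real k - 1) * r N k)"
          by (simp add: of_nat_sum r_def sum_divide_distrib of_nat_diff)
        finally show "(\<Sum>k=2..D. (real k - 1) * r N k) = yv D N (T N) k" by simp
      qed
      have "((\<lambda>N. \<Sum>k=2..D. (real k - 1) * r N k) \<longlongrightarrow> (\<Sum>k=2..D. (real k - 1) * p k)) sequentially"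
        by (intro tendsto_sum tendsto_mult tendsto_const lr) auto
      moreover have "(\<Sum>k=2..D. (real k - 1) * p k) = p k"
        using pm2 ps2 2 by (simp add: algebra_simps sum_subtractf)
      ultimately show ?thesis using ev Lim_transform_eventually by fastforce
    next
      case 3
      have ev: "eventually (\<lambda>N. 1 - (\<Sum>k=2..D. real k * r N k) = yv D N (T N) k) sequentially"
      proof (rule eventually_sequentiallyI[of 1])
        fix N :: nat assume N: "N \<ge> 1"
        have "yv D N (T N) k = (real (N - 1 - S N) + 1) / real N"
          using T[OF N] 3 D1 by (simp add: yv_def c_def)
        also have "\<dots> = 1 - real (S N) / real N"
          using SN[OF N] N by (simp add: of_nat_diff field_simps)
        also have "real (S N) / real N = (\<Sum>k=2..D. real k * r N k)"
          by (simp add: S_def of_nat_sum r_def sum_divide_distrib)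
        finally show "1 - (\<Sum>k=2..D. real k * r N k) = yv D N (T N) k" by simp
      qed
      have "((\<lambda>N. 1 - (\<Sum>k=2..D. real k * r N k)) \<longlongrightarrow> 1 - (\<Sum>k=2..D. real k * p k)) sequentially"
        by (intro tendsto_diff tendsto_sum tendsto_mult tendsto_const lr) auto
      moreover have "1 - (\<Sum>k=2..D. real k * p k) = p k" using pm2 3 by simp
      ultimately show ?thesis using ev Lim_transform_eventually by fastforce
    next
      case 4
      have ev: "eventually (\<lambda>N. r N k = yv D N (T N) k) sequentially"
      proof (rule eventually_sequentiallyI[of 1])
        fix N :: nat assume N: "N \<ge> 1"
        show "r N k = yv D N (T N) k" using T[OF N] 4 by (simp add: yv_def c_def r_def)
      qed
      show ?thesis using lr[of k] 4 ev Lim_transform_eventually by fastforce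
    qed
  qed
  show ?thesis using T lim by blast
qed


lemma G1:
  fixes f :: "nat \<Rightarrow> ereal"
  assumes "\<And>e. e > 0 \<Longrightarrow> eventually (\<lambda>N. f N \<le> ereal (c + e)) sequentially"
  shows "limsup f \<le> ereal c"
proof (rule ereal_le_epsilon2)
  fix e :: real assume "e > 0"
  then have "limsup f \<le> ereal (c + e)" by (intro Limsup_bounded assms)
  then show "limsup f \<le> ereal c + ereal e" by simp
qed

lemma G2:
  fixes f :: "nat \<Rightarrow> ereal"
  assumes "\<And>e. e > 0 \<Longrightarrow> eventually (\<lambda>N. ereal (c - e) \<le> f N) sequentially"
  shows "ereal c \<le> liminf f"
proof (rule ereal_le_epsilon2)
  fix e :: real assume "e > 0"
  then have le: "ereal (c - e) \<le> liminf f" by (intro Liminf_bounded assms)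
  show "ereal c \<le> liminf f + ereal e"
  proof (cases "liminf f")
    case (real r) then show ?thesis using le by simp
  next
    case PInf then show ?thesis by simp
  next
    case MInf then show ?thesis using le by simp
  qed
qed

lemma trees_nonempty: "D \<ge> 1 \<Longrightarrow> N \<ge> 1 \<Longrightarrow> trees N D \<noteq> {}"
proof -
  assume D1: "D \<ge> 1" and N: "N \<ge> 1"
  define p where "p = (\<lambda>k::nat. if k = 1 then 1 else (0::real))"
  have "p \<in> MD D" using D1 by (auto simp: MD_def p_def if_distrib sum.delta' cong: if_cong)
  then show ?thesis using approx_seq[OF D1] N by blast
qed

lemma emp_close_ev:
  assumes D1: "D \<ge> 1" and e: "e > 0"
  shows "eventually (\<lambda>N. \<forall>T\<in>trees N D. ent D (emp_deg D N T) \<le> ent D (yv D N T) + e) sequentially"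
proof -
  obtain d where d: "d > 0" and dd: "\<forall>u v. (\<forall>k\<le>D. 0 \<le> u k \<and> u k \<le> 1 \<and> 0 \<le> v k \<and> v k \<le> 1 \<and> \<bar>u k - v k\<bar> < d)
          \<longrightarrow> ent D u \<le> ent D v + e"
    using ent_close[OF e] by blast
  have "((\<lambda>N::nat. 1 / real N) \<longlongrightarrow> 0) sequentially" by real_asymp
  then have ev: "eventually (\<lambda>N::nat. 1 / real N < d) sequentially" using d by (rule order_tendstoD)
  show ?thesis
  proof (rule eventually_mono[OF ev], intro ballI)
    fix N T assume N: "1 / real N < d" and T: "T \<in> trees N D"
    have c: "emp_deg D N T \<in> cube D" by (rule emp_cube[OF T])
    have m: "yv D N T \<in> MD D" by (rule yv_MD[OF T D1])
    have "\<forall>k\<le>D. 0 \<le> emp_deg D N T k \<and> emp_deg D N T k \<le> 1 \<and> 0 \<le> yv D N T k \<and> yv D N T k \<le> 1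
          \<and> \<bar>emp_deg D N T k - yv D N T k\<bar> < d"
      using c m yv_emp_close[of _ D N T] N by (fastforce simp: cube_def MD_def)
    then show "ent D (emp_deg D N T) \<le> ent D (yv D N T) + e" using dd by blast
  qed
qed

lemma emp_seq_lim:
  assumes D1: "D \<ge> 1" and T: "\<forall>N\<ge>1. T N \<in> trees N D"
    and lim: "\<forall>k. ((\<lambda>N. yv D N (T N) k) \<longlongrightarrow> p k) sequentially" and p: "p \<in> MD D"
  shows "((\<lambda>N. ent D (emp_deg D N (T N))) \<longlongrightarrow> ent D p) sequentially"
proof (rule tendsto_ent)
  fix k assume k: "k \<le> D"
  have l0: "((\<lambda>N::nat. yv D N (T N) k - emp_deg D N (T N) k) \<longlongrightarrow> 0) sequentially"
  proof -
    have i: "((\<lambda>N::nat. 1 / real N) \<longlongrightarrow> 0) sequentially" by real_asymp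
    have "((\<lambda>N::nat. ((if k = 1 then 1 else 0) - (if k = 0 then 1 else 0)) * (1 / real N)) \<longlongrightarrow> ((if k = 1 then 1 else 0) - (if k = 0 then 1 else 0)) * 0) sequentially"
      by (intro tendsto_mult tendsto_const i)
    then show ?thesis using k by (simp add: yv_emp_diff)
  qed
  have "((\<lambda>N. yv D N (T N) k - (yv D N (T N) k - emp_deg D N (T N) k)) \<longlongrightarrow> p k - 0) sequentially"
    by (intro tendsto_diff lim[rule_format] l0)
  then show "((\<lambda>N. emp_deg D N (T N) k) \<longlongrightarrow> p k) sequentially" by simp
  show "eventually (\<lambda>N. emp_deg D N (T N) k \<in> {0..1}) sequentially"
  proof (rule eventually_sequentiallyI[of 1])
    fix N :: nat assume "N \<ge> 1"
    then have "emp_deg D N (T N) \<in> cube D" using T emp_cube by blast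
    then show "emp_deg D N (T N) k \<in> {0..1}" using k by (simp add: cube_def)
  qed
  show "p k \<in> {0..1}" using p k by (simp add: MD_def)
qed

lemma f_pos:
  assumes "N \<ge> 1" "0 < cS" "0 < cT"
  shows "ereal (1 / real N) * eln (real cS / real cT) = ereal ((ln (real cS) - ln (real cT)) / real N)"
  using assms by (simp add: eln_def ln_div)

lemma f_zero:
  assumes "N \<ge> 1"
  shows "ereal (1 / real N) * eln (real 0 / real cT) = - \<infinity>"
  using assms by (simp add: eln_def)

lemma UB:
  assumes D1: "D \<ge> 1" and r: "\<forall>q\<in>C. ent D q \<le> H - r0"
    and Hn: "\<forall>e>0. \<exists>q\<in>MD D. ent D q > H - e" and e: "e > 0"
  shows "eventually (\<lambda>N. ereal (1 / real N) * eln (real (card {T\<in>trees N D. yv D N T \<in> C}) / real (card (trees N D)))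
            \<le> ereal (- r0 + e)) sequentially"
proof -
  define e' where "e' = e / 4"
  have e': "e' > 0" using e by (simp add: e'_def)
  obtain q where q: "q \<in> MD D" "ent D q > H - e'" using Hn e' by blast
  obtain Ts where Ts: "\<forall>N\<ge>1. Ts N \<in> trees N D" "\<forall>k. ((\<lambda>N. yv D N (Ts N) k) \<longlongrightarrow> q k) sequentially"
    using approx_seq[OF D1 q(1)] by blast
  have ev1: "eventually (\<lambda>N. \<forall>T\<in>trees N D. ent D (emp_deg D N T) \<le> ent D (yv D N T) + e') sequentially"
    by (rule emp_close_ev[OF D1 e'])
  have ev2: "eventually (\<lambda>N. ent D (emp_deg D N (Ts N)) > H - 2 * e') sequentially"
    using order_tendstoD(1)[OF emp_seq_lim[OF D1 Ts q(1)], of "H - 2 * e'"] q(2) e' by simp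
  define err where "err N = (real (2 * D + 3) * ln (real N + 1) + real (D + 2) + ln (real N)) / real N" for N :: nat
  have ev3: "eventually (\<lambda>N. err N < e') sequentially"
    using order_tendstoD(2)[OF err_tendsto e'] unfolding err_def .
  have ev4: "eventually (\<lambda>N::nat. N \<ge> 1) sequentially" by (rule eventually_ge_at_top)
  show ?thesis
  proof (rule eventually_mono[OF eventually_conj[OF ev1 eventually_conj[OF ev2 eventually_conj[OF ev3 ev4]]]])
    fix N assume A: "(\<forall>T\<in>trees N D. ent D (emp_deg D N T) \<le> ent D (yv D N T) + e') \<and>
       ent D (emp_deg D N (Ts N)) > H - 2 * e' \<and> err N < e' \<and> N \<ge> 1"
    then have N: "N \<ge> 1" and Np: "real N > 0" by auto
    define S where "S = {T\<in>trees N D. yv D N T \<in> C}"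
    have TsN: "Ts N \<in> trees N D" using Ts N by auto
    have finT: "finite (trees N D)" by (rule finite_trees)
    have cT: "card (trees N D) > 0" using TsN finT card_gt_0_iff by blast
    have lT: "real N * ent D (emp_deg D N (Ts N)) - real (D + 1) * (1 + ln (real N + 1)) - ln (real N)
       \<le> ln (real (card (trees N D)))"
      by (rule count_lower[OF TsN _ finT]) (use Tset_sub_trees[OF TsN] in blast)
    show "ereal (1 / real N) * eln (real (card S) / real (card (trees N D))) \<le> ereal (- r0 + e)"
    proof (cases "S = {}")
      case True
      then show ?thesis using f_zero[OF N] by simp
    next
      case False
      have finS: "finite S" using finT by (simp add: S_def)
      have cS: "card S > 0" using False finS card_gt_0_iff by blast
      have lS: "ln (real (card S)) \<le> real (D + 1) * ln (real N + 1) + 1 + ln (real N + 1) + real N * (H - r0 + e')"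
      proof (rule count_upper)
        show "S \<subseteq> trees N D" "S \<noteq> {}" using False by (auto simp: S_def)
        fix T assume "T \<in> S"
        then have "T \<in> trees N D" "yv D N T \<in> C" by (auto simp: S_def)
        then have "ent D (emp_deg D N T) \<le> ent D (yv D N T) + e'" "ent D (yv D N T) \<le> H - r0"
          using A r by auto
        then show "ent D (emp_deg D N T) \<le> H - r0 + e'" by linarith
      qed
      have m1: "real N * (H - 2 * e') \<le> real N * ent D (emp_deg D N (Ts N))"
        using A Np by (intro mult_left_mono) auto
      have errN: "real N * err N = real (2 * D + 3) * ln (real N + 1) + real (D + 2) + ln (real N)"
        using Np by (simp add: err_def)
      have m2: "real N * err N \<le> real N * e'" using A Np by (intro mult_left_mono) auto
      have "ln (real (card S)) - ln (real (card (trees N D))) \<le> real N * (- r0 + 3 * e') + real N * err N"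
        using lS lT m1 errN by (simp add: algebra_simps of_nat_add of_nat_mult)
      also have "\<dots> \<le> real N * (- r0 + e)"
        using m2 by (simp add: e'_def algebra_simps)
      finally have "(ln (real (card S)) - ln (real (card (trees N D)))) / real N \<le> - r0 + e"
        using Np by (simp add: divide_le_eq mult.commute)
      then show ?thesis using f_pos[OF N cS cT] by simp
    qed
  qed
qed

lemma LB:
  assumes D1: "D \<ge> 1" and p: "p \<in> MD D" and V: "open V" "p \<in> V" and UV: "MD D \<inter> V \<subseteq> U"
    and Hd: "\<forall>q\<in>MD D. ent D q \<le> H" and e: "e > 0"
  shows "eventually (\<lambda>N. ereal (ent D p - H - e) \<le>
            ereal (1 / real N) * eln (real (card {T\<in>trees N D. yv D N T \<in> U}) / real (card (trees N D)))) sequentially"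
proof -
  define e' where "e' = e / 3"
  have e': "e' > 0" using e by (simp add: e'_def)
  obtain Ts where Ts: "\<forall>N\<ge>1. Ts N \<in> trees N D" "\<forall>k. ((\<lambda>N. yv D N (Ts N) k) \<longlongrightarrow> p k) sequentially"
    using approx_seq[OF D1 p] by blast
  have "((\<lambda>N. yv D N (Ts N)) \<longlongrightarrow> p) sequentially"
    by (rule tendsto_fun_componentwise) (use Ts(2) in blast)
  then have ev0: "eventually (\<lambda>N. yv D N (Ts N) \<in> V) sequentially"
    using V topological_tendstoD by blast
  have ev1: "eventually (\<lambda>N. \<forall>T\<in>trees N D. ent D (emp_deg D N T) \<le> ent D (yv D N T) + e') sequentially"
    by (rule emp_close_ev[OF D1 e'])
  have ev2: "eventually (\<lambda>N. ent D (emp_deg D N (Ts N)) > ent D p - e') sequentially"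
    using order_tendstoD(1)[OF emp_seq_lim[OF D1 Ts p], of "ent D p - e'"] e' by simp
  define err where "err N = (real (2 * D + 3) * ln (real N + 1) + real (D + 2) + ln (real N)) / real N" for N :: nat
  have ev3: "eventually (\<lambda>N. err N < e') sequentially"
    using order_tendstoD(2)[OF err_tendsto e'] unfolding err_def .
  have ev4: "eventually (\<lambda>N::nat. N \<ge> 1) sequentially" by (rule eventually_ge_at_top)
  show ?thesis
  proof (rule eventually_mono[OF eventually_conj[OF ev0 eventually_conj[OF ev1 eventually_conj[OF ev2 eventually_conj[OF ev3 ev4]]]]])
    fix N assume A: "yv D N (Ts N) \<in> V \<and> (\<forall>T\<in>trees N D. ent D (emp_deg D N T) \<le> ent D (yv D N T) + e') \<and>
       ent D (emp_deg D N (Ts N)) > ent D p - e' \<and> err N < e' \<and> N \<ge> 1"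
    then have N: "N \<ge> 1" and Np: "real N > 0" by auto
    define S where "S = {T\<in>trees N D. yv D N T \<in> U}"
    have TsN: "Ts N \<in> trees N D" using Ts N by auto
    have finT: "finite (trees N D)" by (rule finite_trees)
    have cT: "card (trees N D) > 0" using TsN finT card_gt_0_iff by blast
    have finS: "finite S" using finT by (simp add: S_def)
    have yU: "yv D N (Ts N) \<in> U" using A yv_MD[OF TsN D1] UV by blast
    have sub: "Tset (mset (pre (Ts N))) \<subseteq> S"
    proof
      fix t assume t: "t \<in> Tset (mset (pre (Ts N)))"
      then have "t \<in> trees N D" using Tset_sub_trees[OF TsN] by blast
      moreover have "yv D N t = yv D N (Ts N)" using yv_cls[OF t] by blast
      ultimately show "t \<in> S" using yU by (simp add: S_def)
    qed
    have lS: "real N * ent D (emp_deg D N (Ts N)) - real (D + 1) * (1 + ln (real N + 1)) - ln (real N)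
       \<le> ln (real (card S))"
      by (rule count_lower[OF TsN sub finS])
    have cS: "card S > 0" using sub finS class_bounds(2)[OF TsN] card_mono[OF finS sub] by linarith
    have lT: "ln (real (card (trees N D))) \<le> real (D + 1) * ln (real N + 1) + 1 + ln (real N + 1) + real N * (H + e')"
    proof (rule count_upper)
      show "trees N D \<subseteq> trees N D" "trees N D \<noteq> {}" using TsN by auto
      fix T assume T: "T \<in> trees N D"
      then have "ent D (emp_deg D N T) \<le> ent D (yv D N T) + e'" "ent D (yv D N T) \<le> H"
        using A Hd yv_MD[OF T D1] by auto
      then show "ent D (emp_deg D N T) \<le> H + e'" by linarith
    qed
    have m1: "real N * (ent D p - e') \<le> real N * ent D (emp_deg D N (Ts N))"
      using A Np by (intro mult_left_mono) auto
    have errN: "real N * err N = real (2 * D + 3) * ln (real N + 1) + real (D + 2) + ln (real N)"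
      using Np by (simp add: err_def)
    have m2: "real N * err N \<le> real N * e'" using A Np by (intro mult_left_mono) auto
    have "real N * (ent D p - H - e) \<le> real N * (ent D p - H - 2 * e') - real N * err N"
      using m2 by (simp add: e'_def algebra_simps)
    also have "\<dots> \<le> ln (real (card S)) - ln (real (card (trees N D)))"
      using lS lT m1 errN by (simp add: algebra_simps of_nat_add of_nat_mult)
    finally have "ent D p - H - e \<le> (ln (real (card S)) - ln (real (card (trees N D)))) / real N"
      using Np by (simp add: le_divide_eq mult.commute)
    then show "ereal (ent D p - H - e) \<le> ereal (1 / real N) * eln (real (card S) / real (card (trees N D)))"
      using f_pos[OF N cS cT] by simp
  qed
qed

lemma e1_MD: "D \<ge> 1 \<Longrightarrow> (\<lambda>k::nat. if k = 1 then 1 else (0::real)) \<in> MD D"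
  by (auto simp: MD_def if_distrib sum.delta' cong: if_cong)

lemma dist_eq:
  assumes T: "T \<in> trees N D" and D1: "D \<ge> 1"
  shows "(\<Sum>k\<le>D. \<bar>emp_deg D N T k - yv D N T k\<bar>) = 2 / real N"
proof -
  have d: "\<bar>emp_deg D N T k - yv D N T k\<bar> = (if k \<le> D \<and> (k = 0 \<or> k = 1) then 1 / real N else 0)" for k
  proof -
    have "\<bar>emp_deg D N T k - yv D N T k\<bar> = \<bar>yv D N T k - emp_deg D N T k\<bar>" by (rule abs_minus_commute)
    also have "\<dots> = \<bar>if k \<le> D then ((if k = 1 then 1 else 0) - (if k = 0 then 1 else 0)) / real N else 0\<bar>"
      by (simp only: yv_emp_diff)
    finally show ?thesis by (cases "k \<le> D"; cases "k = 0"; cases "k = 1") auto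
  qed
  have "(\<Sum>k\<le>D. \<bar>emp_deg D N T k - yv D N T k\<bar>) =
        \<bar>emp_deg D N T 0 - yv D N T 0\<bar> + \<bar>emp_deg D N T 1 - yv D N T 1\<bar> + (\<Sum>k=2..D. \<bar>emp_deg D N T k - yv D N T k\<bar>)"
    by (rule sum_split01[OF D1])
  also have "(\<Sum>k=2..D. \<bar>emp_deg D N T k - yv D N T k\<bar>) = 0" by (intro sum.neutral) (auto simp: d)
  finally show ?thesis using D1 by (simp add: d)
qed


theorem theorem1:
  fixes D :: nat and lam1 mu1 piS :: real
  assumes "D \<ge> 2" and "0 < lam1" and "lam1 < mu1" and "0 < piS" and "piS \<le> 1"
  defines "a \<equiv> param_a lam1 mu1 piS" and "b \<equiv> param_b lam1 mu1 piS"
  shows "\<exists>Q :: nat \<Rightarrow> ((nat \<Rightarrow> real) \<times> (nat \<Rightarrow> real)) measure.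
     (\<forall>N. trees N D \<noteq> {} \<longrightarrow>
        prob_space (Q N) \<and> sets (Q N) = sets borel \<and>
        emeasure (Q N) (UNIV - cube D \<times> MD D) = 0 \<and>
        distr (Q N) borel fst = PN D N \<and>
        emeasure (Q N) {(x, y). (\<Sum>k\<le>D. \<bar>x k - y k\<bar>) > 2 / real N} = 0) \<and>
     (\<forall>C. closedin (top_of_set (MD D)) C \<longrightarrow>
        limsup (\<lambda>N. ereal (1 / real N) * eln (measure (distr (Q N) borel snd) C))
          \<le> - (INF p\<in>C. ereal (Ifun a b D p))) \<and>
     (\<forall>U. openin (top_of_set (MD D)) U \<longrightarrow>
        liminf (\<lambda>N. ereal (1 / real N) * eln (measure (distr (Q N) borel snd) U))
          \<ge> - (INF p\<in>U. ereal (Ifun a b D p)))"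
proof -
  have D1: "D \<ge> 1" using assms(1) by simp
  define c0 where "c0 = ln (1 / a) + ln (1 / b)"
  have J: "Jfun a b D q = c0 - ent D q" for q by (simp add: Jfun_def ent_def c0_def)
  define m0 where "m0 = (INF q\<in>MD D. Jfun a b D q)"
  define H where "H = c0 - m0"
  have MDne: "MD D \<noteq> {}" using e1_MD[OF D1] by blast
  have bdd: "bdd_below (Jfun a b D ` MD D)"
  proof (rule bdd_belowI2)
    fix q assume q: "q \<in> MD D"
    have "ent D q \<le> real (D + 1)" by (rule ent_bounds(2)) (use q in \<open>auto simp: MD_def\<close>)
    then show "c0 - real (D + 1) \<le> Jfun a b D q" by (simp add: J)
  qed
  have Hd: "\<forall>q\<in>MD D. ent D q \<le> H"
  proof
    fix q assume "q \<in> MD D"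
    then have "m0 \<le> Jfun a b D q" unfolding m0_def by (rule cINF_lower[OF bdd])
    then show "ent D q \<le> H" by (simp add: H_def J)
  qed
  have Hn: "\<forall>e>0. \<exists>q\<in>MD D. ent D q > H - e"
  proof (intro allI impI)
    fix e :: real assume e: "e > 0"
    have "m0 < m0 + e" using e by simp
    then obtain q where q: "q \<in> MD D" "Jfun a b D q < m0 + e"
      using cINF_less_iff[OF MDne bdd] unfolding m0_def by blast
    have "ent D q > H - e" using q(2) by (simp add: H_def J)
    then show "\<exists>q\<in>MD D. ent D q > H - e" using q(1) by blast
  qed
  have If: "Ifun a b D q = H - ent D q" for q
  proof -
    have "Ifun a b D q = Jfun a b D q - m0" by (simp only: Ifun_def m0_def)
    then show ?thesis using J[of q] by (simp add: H_def)
  qed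
  define g where "g N T = (emp_deg D N T, yv D N T)" for N T
  define Q where "Q N = distr (measure_pmf (pmf_of_set (trees N D))) borel (g N)" for N
  have meas: "g N \<in> measurable (measure_pmf (pmf_of_set (trees N D))) borel" for N by simp
  have measy: "yv D N \<in> measurable (measure_pmf (pmf_of_set (trees N D))) borel" for N by simp
  have snd_distr: "distr (Q N) borel snd = distr (measure_pmf (pmf_of_set (trees N D))) borel (yv D N)" for N
    unfolding Q_def by (subst distr_distr[OF meas_snd meas]) (simp add: g_def o_def)
  have fst_distr: "distr (Q N) borel fst = PN D N" for N
    unfolding Q_def PN_def by (subst distr_distr[OF meas_fst meas]) (simp add: g_def o_def)
  have measC: "measure (distr (Q N) borel snd) X = real (card {T\<in>trees N D. yv D N T \<in> X}) / real (card (trees N D))"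
    if X: "X \<in> sets borel" and N: "N \<ge> 1" for X N
  proof -
    have ne: "trees N D \<noteq> {}" by (rule trees_nonempty[OF D1 N])
    have "measure (distr (Q N) borel snd) X = measure (measure_pmf (pmf_of_set (trees N D))) (yv D N -` X)"
      unfolding snd_distr by (subst measure_distr[OF measy X]) simp
    also have "\<dots> = real (card (trees N D \<inter> yv D N -` X)) / real (card (trees N D))"
      by (rule measure_pmf_of_set[OF ne finite_trees])
    also have "trees N D \<inter> yv D N -` X = {T\<in>trees N D. yv D N T \<in> X}" by auto
    finally show ?thesis .
  qed
  have part1: "\<forall>N. trees N D \<noteq> {} \<longrightarrow>
        prob_space (Q N) \<and> sets (Q N) = sets borel \<and>
        emeasure (Q N) (UNIV - cube D \<times> MD D) = 0 \<and>
        distr (Q N) borel fst = PN D N \<and>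
        emeasure (Q N) {(x, y). (\<Sum>k\<le>D. \<bar>x k - y k\<bar>) > 2 / real N} = 0"
  proof (intro allI impI conjI)
    fix N assume ne: "trees N D \<noteq> {}"
    show "prob_space (Q N)" unfolding Q_def
      by (rule prob_space.prob_space_distr[OF prob_space_measure_pmf meas])
    show "sets (Q N) = sets borel" by (simp add: Q_def)
    show "distr (Q N) borel fst = PN D N" by (rule fst_distr)
    have X: "UNIV - cube D \<times> MD D \<in> sets borel"
      by (intro borel_open open_Diff open_UNIV closed_Times closed_cube closed_MD)
    have "emeasure (Q N) (UNIV - cube D \<times> MD D) =
          emeasure (measure_pmf (pmf_of_set (trees N D))) (g N -` (UNIV - cube D \<times> MD D))"
      unfolding Q_def by (subst emeasure_distr[OF meas X]) simp
    also have "\<dots> = real (card (trees N D \<inter> g N -` (UNIV - cube D \<times> MD D))) / real (card (trees N D))"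
      by (rule emeasure_pmf_of_set[OF ne finite_trees])
    also have "trees N D \<inter> g N -` (UNIV - cube D \<times> MD D) = {}"
      using emp_cube yv_MD[OF _ D1] by (auto simp: g_def)
    finally show "emeasure (Q N) (UNIV - cube D \<times> MD D) = 0" by simp
    have Y: "{(x, y). (\<Sum>k\<le>D. \<bar>x k - y k\<bar>) > 2 / real N} \<in> sets borel"
      by (intro borel_open open_dist_set)
    have "emeasure (Q N) {(x, y). (\<Sum>k\<le>D. \<bar>x k - y k\<bar>) > 2 / real N} =
          emeasure (measure_pmf (pmf_of_set (trees N D))) (g N -` {(x, y). (\<Sum>k\<le>D. \<bar>x k - y k\<bar>) > 2 / real N})"
      unfolding Q_def by (subst emeasure_distr[OF meas Y]) simp
    also have "\<dots> = real (card (trees N D \<inter> g N -` {(x, y). (\<Sum>k\<le>D. \<bar>x k - y k\<bar>) > 2 / real N})) / real (card (trees N D))"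
      by (rule emeasure_pmf_of_set[OF ne finite_trees])
    also have "trees N D \<inter> g N -` {(x, y). (\<Sum>k\<le>D. \<bar>x k - y k\<bar>) > 2 / real N} = {}"
      using dist_eq[OF _ D1] by (auto simp: g_def)
    finally show "emeasure (Q N) {(x, y). (\<Sum>k\<le>D. \<bar>x k - y k\<bar>) > 2 / real N} = 0" by simp
  qed
  have part2: "\<forall>C. closedin (top_of_set (MD D)) C \<longrightarrow>
        limsup (\<lambda>N. ereal (1 / real N) * eln (measure (distr (Q N) borel snd) C))
          \<le> - (INF p\<in>C. ereal (Ifun a b D p))"
  proof (intro allI impI)
    fix C assume cC: "closedin (top_of_set (MD D)) C"
    have CM: "C \<subseteq> MD D" using closedin_subset[OF cC] by simp
    have Cb: "C \<in> sets borel" using closedin_closed_trans[OF cC closed_MD] by simp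
    let ?F = "\<lambda>N. ereal (1 / real N) * eln (measure (distr (Q N) borel snd) C)"
    have Feq: "eventually (\<lambda>N. ?F N = ereal (1 / real N) * eln (real (card {T\<in>trees N D. yv D N T \<in> C}) / real (card (trees N D)))) sequentially"
      by (rule eventually_mono[OF eventually_ge_at_top[of 1]]) (simp add: measC[OF Cb])
    show "limsup ?F \<le> - (INF p\<in>C. ereal (Ifun a b D p))"
    proof (cases "C = {}")
      case True
      have "eventually (\<lambda>N. ?F N \<le> - \<infinity>) sequentially"
        by (rule eventually_mono[OF eventually_ge_at_top[of 1]]) (simp add: True eln_def)
      then have "limsup ?F \<le> - \<infinity>" by (rule Limsup_bounded)
      then show ?thesis by simp
    next
      case False
      define I0 where "I0 = (INF p\<in>C. ereal (Ifun a b D p))"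
      have I0lo: "0 \<le> I0" unfolding I0_def
        by (rule INF_greatest) (use CM Hd If in auto)
      obtain p0 where p0: "p0 \<in> C" using False by blast
      have "I0 \<le> ereal (Ifun a b D p0)" unfolding I0_def by (rule INF_lower[OF p0])
      then obtain r0 where r0: "I0 = ereal r0" using I0lo by (cases I0) auto
      have r: "\<forall>q\<in>C. ent D q \<le> H - r0"
      proof
        fix q assume "q \<in> C"
        then have "I0 \<le> ereal (Ifun a b D q)" unfolding I0_def by (rule INF_lower)
        then show "ent D q \<le> H - r0" using r0 If by simp
      qed
      have "limsup ?F \<le> ereal (- r0)"
      proof (rule G1)
        fix e :: real assume e: "e > 0"
        show "eventually (\<lambda>N. ?F N \<le> ereal (- r0 + e)) sequentially"
          using eventually_conj[OF Feq UB[OF D1 r Hn e]] by (rule eventually_mono) simp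
      qed
      then show ?thesis using r0 by (simp add: I0_def)
    qed
  qed
  have part3: "\<forall>U. openin (top_of_set (MD D)) U \<longrightarrow>
        liminf (\<lambda>N. ereal (1 / real N) * eln (measure (distr (Q N) borel snd) U))
          \<ge> - (INF p\<in>U. ereal (Ifun a b D p))"
  proof (intro allI impI)
    fix U assume oU: "openin (top_of_set (MD D)) U"
    then obtain V where V: "open V" "U = MD D \<inter> V" by (auto simp: openin_open)
    have Ub: "U \<in> sets borel" using V closed_MD by (simp add: sets.Int borel_closed borel_open)
    let ?F = "\<lambda>N. ereal (1 / real N) * eln (measure (distr (Q N) borel snd) U)"
    have Feq: "eventually (\<lambda>N. ?F N = ereal (1 / real N) * eln (real (card {T\<in>trees N D. yv D N T \<in> U}) / real (card (trees N D)))) sequentially"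
      by (rule eventually_mono[OF eventually_ge_at_top[of 1]]) (simp add: measC[OF Ub])
    have "- liminf ?F \<le> (INF p\<in>U. ereal (Ifun a b D p))"
    proof (rule INF_greatest)
      fix p assume pU: "p \<in> U"
      have pM: "p \<in> MD D" and pV: "p \<in> V" using pU V by auto
      have "ereal (ent D p - H) \<le> liminf ?F"
      proof (rule G2)
        fix e :: real assume e: "e > 0"
        show "eventually (\<lambda>N. ereal (ent D p - H - e) \<le> ?F N) sequentially"
          using eventually_conj[OF Feq LB[OF D1 pM V(1) pV _ Hd e, of U]] V(2)
          by (auto elim: eventually_mono)
      qed
      then show "- liminf ?F \<le> ereal (Ifun a b D p)" using If[of p]
        by (simp add: ereal_uminus_le_reorder)
    qed
    then show "- (INF p\<in>U. ereal (Ifun a b D p)) \<le> liminf ?F"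
      by (simp add: ereal_uminus_le_reorder)
  qed
  show ?thesis using part1 part2 part3 by blast
qed


end
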